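(* Let $F_2$ be the free group on $\{x,y\}$, $\sigma = (\{x\}, y)$, $\tau = (\{y\}, x)$. Let $w$ be a cyclic word in $F_2$ and let $\psi$ be a chain of the form (C1) $\tau^{m_k}\sigma^{l_k} \cdots \tau^{m_1}\sigma^{l_1}$ (respectively (C2) $\tau^{-m_k}\sigma^{-l_k} \cdots \tau^{-m_1}\sigma^{-l_1}$), with $k\in\mathbb{N}$ and all $l_i, m_i \ge 0$. If $\psi$ contains at least $\|w\|$ factors of $\sigma$ (respectively $\sigma^{-1}$), i.e. $\sum_i l_i \ge \|w\|$, then no proper cancellation occurs in passing from $\psi(w)$ to $\sigma\psi(w)$ (respectively from $\psi(w)$ to $\sigma^{-1}\psi(w)$). If $\psi$ contains at least $\|w\|$ factors of $\tau$ (respectively $\tau^{-1}$), i.e. $\sum_i m_i \ge \|w\|$, then no proper cancellation occurs in passing from $\psi(w)$ to $\tau\psi(w)$ (respectively from $\psi(w)$ to $\tau^{-1}\psi(w)$).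
   Context: $\sigma$ is the automorphism with $\sigma(x) = xy$, $\sigma(y) = y$; $\tau$ is the automorphism with $\tau(y) = yx$, $\tau(x) = x$. A cyclic word is the set of all cyclic permutations of a cyclically reduced word; $\|w\|$ is its length. An automorphism $\alpha \in \{\sigma^{\pm1},\tau^{\pm1}\}$ is applied to a cyclic word $w$ by replacing each letter $c$ by $\alpha(c)$ and cyclically freely reducing. For $\alpha = \sigma^{\pm1}$, a subword $xy^rx^{-1}$ ($r \neq 0$) of $w$ is mapped to itself although cancellation occurs in its image (e.g. $\sigma(xy^rx^{-1}) = xy\cdot y^r\cdot y^{-1}x^{-1}$); similarly for $\alpha=\tau^{\pm1}$ and subwords $yx^ry^{-1}$ ($r\neq 0$). Such cancellation is called trivial cancellation; any cancellation that is not trivial is called proper cancellation (e.g. $\sigma$ applied to a subword $xy^{-r}x$, $r\ge1$, yields $xy^{-r+1}xy$, which involves proper cancellation). *)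

theory Defs
  imports Main
begin

text \<open>Letters of the free group F_2 on {x,y}: a generator together with a sign
  (True = positive exponent, False = inverse). Words are lists of letters.\<close>

datatype gen = X | Y

type_synonym letter = "gen \<times> bool"
type_synonym word = "letter list"

definition inv_letter :: "letter \<Rightarrow> letter" where
  "inv_letter a = (fst a, \<not> snd a)"

definition freely_reduced :: "word \<Rightarrow> bool" where
  "freely_reduced w \<longleftrightarrow> (\<forall>i. Suc i < length w \<longrightarrow> w ! Suc i \<noteq> inv_letter (w ! i))"

text \<open>Cyclically reduced word (a representative of a cyclic word).\<close>
definition cyc_reduced :: "word \<Rightarrow> bool" where
  "cyc_reduced w \<longleftrightarrow> freely_reduced w \<and> (2 \<le> length w \<longrightarrow> last w \<noteq> inv_letter (hd w))"

definition free_reduce :: "word \<Rightarrow> word" where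
  "free_reduce w = foldr (\<lambda>a acc. case acc of [] \<Rightarrow> [a]
       | b # r \<Rightarrow> (if b = inv_letter a then r else a # acc)) w []"

function cyc_strip :: "word \<Rightarrow> word" where
  "cyc_strip w = (if 2 \<le> length w \<and> last w = inv_letter (hd w)
                   then cyc_strip (butlast (tl w)) else w)"
  by pat_completeness auto
termination by (relation "measure length") auto

definition cyc_reduce :: "word \<Rightarrow> word" where
  "cyc_reduce w = cyc_strip (free_reduce w)"

text \<open>The automorphisms sigma, sigma^-1, tau, tau^-1.
  sigma(x) = xy, sigma(y) = y; tau(y) = yx, tau(x) = x.\<close>
datatype aut = Sig | SigInv | Tau | TauInv

fun img :: "aut \<Rightarrow> letter \<Rightarrow> word" where
  "img Sig (X, True) = [(X, True), (Y, True)]"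
| "img Sig (X, False) = [(Y, False), (X, False)]"
| "img SigInv (X, True) = [(X, True), (Y, False)]"
| "img SigInv (X, False) = [(Y, True), (X, False)]"
| "img Tau (Y, True) = [(Y, True), (X, True)]"
| "img Tau (Y, False) = [(X, False), (Y, False)]"
| "img TauInv (Y, True) = [(Y, True), (X, False)]"
| "img TauInv (Y, False) = [(X, True), (Y, False)]"
| "img _ c = [c]"

definition apply_aut :: "aut \<Rightarrow> word \<Rightarrow> word" where
  "apply_aut \<alpha> w = cyc_reduce (concat (map (img \<alpha>) w))"

text \<open>The chain  a^(m_k) b^(l_k) ... a^(m_1) b^(l_1)  applied to w
  (b^(l_1) is applied first). For (C1) a = Tau, b = Sig; for (C2) a = TauInv, b = SigInv.\<close>
fun chain :: "aut \<Rightarrow> aut \<Rightarrow> (nat \<Rightarrow> nat) \<Rightarrow> (nat \<Rightarrow> nat) \<Rightarrow> nat \<Rightarrow> word \<Rightarrow> word" where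
  "chain a b l m 0 w = w"
| "chain a b l m (Suc i) w =
     (apply_aut a ^^ m (Suc i)) ((apply_aut b ^^ l (Suc i)) (chain a b l m i w))"

definition cancel_at :: "aut \<Rightarrow> word \<Rightarrow> nat \<Rightarrow> bool" where
  "cancel_at \<alpha> u i \<longleftrightarrow>
     last (img \<alpha> (u ! i)) = inv_letter (hd (img \<alpha> (u ! (Suc i mod length u))))"

text \<open>The generator g1 conjugating in the special subwords: x for sigma^{+-1}
  (subwords x y^r x^-1), y for tau^{+-1} (subwords y x^r y^-1).\<close>
fun conj_gen :: "aut \<Rightarrow> gen" where
  "conj_gen Sig = X" | "conj_gen SigInv = X" | "conj_gen Tau = Y" | "conj_gen TauInv = Y"

fun other_gen :: "aut \<Rightarrow> gen" where
  "other_gen Sig = Y" | "other_gen SigInv = Y" | "other_gen Tau = X" | "other_gen TauInv = X"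

text \<open>The boundary i lies inside a cyclic subword g1 g2^r g1^-1 (r \<noteq> 0) of u:
  trivial cancellation.\<close>
definition trivial_at :: "aut \<Rightarrow> word \<Rightarrow> nat \<Rightarrow> bool" where
  "trivial_at \<alpha> u i \<longleftrightarrow> (let n = length u in
     \<exists>s r e. 1 \<le> r \<and> r + 2 \<le> n \<and>
       u ! (s mod n) = (conj_gen \<alpha>, True) \<and>
       u ! ((s + r + 1) mod n) = (conj_gen \<alpha>, False) \<and>
       (\<forall>j\<in>{1..r}. u ! ((s + j) mod n) = (other_gen \<alpha>, e)) \<and>
       (\<exists>j\<le>r. i = (s + j) mod n))"

definition proper_cancellation :: "aut \<Rightarrow> word \<Rightarrow> bool" where
  "proper_cancellation \<alpha> u \<longleftrightarrow>
     (\<exists>i < length u. cancel_at \<alpha> u i \<and> \<not> trivial_at \<alpha> u i)"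

end

theory Submission
  imports Defs
begin


lemma inv_inv[simp]: "inv_letter (inv_letter a) = a"
  by (cases a) (simp add: inv_letter_def)
lemma inv_neq[simp]: "inv_letter a \<noteq> a" "a \<noteq> inv_letter a"
  by (cases a; simp add: inv_letter_def)+
lemma inv_pair[simp]: "inv_letter (g, s) = (g, \<not> s)"
  by (simp add: inv_letter_def)
lemma inv_eq_iff: "(inv_letter a = b) = (a = inv_letter b)"
  by (cases a; cases b; auto simp: inv_letter_def)

lemma fr_Nil[simp]: "freely_reduced []" by (simp add: freely_reduced_def)
lemma fr_Cons: "freely_reduced (a # w) \<longleftrightarrow> (w = [] \<or> hd w \<noteq> inv_letter a) \<and> freely_reduced w"
proof -
  have A: "freely_reduced (a # w) \<Longrightarrow> (w = [] \<or> hd w \<noteq> inv_letter a) \<and> freely_reduced w"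
    unfolding freely_reduced_def
    apply (intro conjI)
     apply (cases w; force)
    apply (intro allI impI)
    subgoal for i by (drule spec[of _ "Suc i"]) simp
    done
  have B: "(w = [] \<or> hd w \<noteq> inv_letter a) \<and> freely_reduced w \<Longrightarrow> freely_reduced (a # w)"
    unfolding freely_reduced_def
    apply (intro allI impI)
    subgoal for i by (cases i; cases w; auto)
    done
  show ?thesis using A B by blast
qed

lemma fr_single[simp]: "freely_reduced [a]" by (simp add: fr_Cons)

lemma fr_append: "freely_reduced (xs @ ys) \<longleftrightarrow> freely_reduced xs \<and> freely_reduced ys \<and>
   (xs = [] \<or> ys = [] \<or> hd ys \<noteq> inv_letter (last xs))"
  by (induction xs) (auto simp: fr_Cons)

declare cyc_strip.simps[simp del]

definition fr_step :: "letter \<Rightarrow> word \<Rightarrow> word" where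
  "fr_step a acc = (case acc of [] \<Rightarrow> [a] | b # r \<Rightarrow> (if b = inv_letter a then r else a # acc))"

lemma free_reduce_Nil[simp]: "free_reduce [] = []" by (simp add: free_reduce_def)
lemma free_reduce_Cons: "free_reduce (a # w) = fr_step a (free_reduce w)"
  by (simp add: free_reduce_def fr_step_def)

lemma fr_step_red: "freely_reduced S \<Longrightarrow> freely_reduced (fr_step a S)"
  by (cases S) (auto simp: fr_step_def fr_Cons)

lemma free_reduce_red: "freely_reduced (free_reduce w)"
  by (induction w) (auto simp: free_reduce_Cons fr_step_red)

lemma fr_step_cancel: "freely_reduced S \<Longrightarrow> fr_step c (fr_step (inv_letter c) S) = S"
  apply (cases S)
   apply (simp add: fr_step_def)
  subgoal for b r by (cases r) (auto simp: fr_step_def fr_Cons)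
  done

lemma free_reduce_cancel: "free_reduce (a @ c # inv_letter c # b) = free_reduce (a @ b)"
  by (induction a) (auto simp: free_reduce_Cons fr_step_cancel free_reduce_red)

lemma free_reduce_cancel': "free_reduce (a @ inv_letter c # c # b) = free_reduce (a @ b)"
  using free_reduce_cancel[of a "inv_letter c" b] by simp

lemma free_reduce_id: "freely_reduced w \<Longrightarrow> free_reduce w = w"
  by (induction w) (auto simp: free_reduce_Cons fr_Cons fr_step_def split: list.splits)

lemma cyc_strip_red: "freely_reduced w \<Longrightarrow> cyc_reduced (cyc_strip w)"
proof (induction w rule: cyc_strip.induct)
  case (1 w)
  show ?case
  proof (cases "2 \<le> length w \<and> last w = inv_letter (hd w)")
    case True
    have "freely_reduced (butlast (tl w))"
    proof -
      obtain a r where w: "w = a # r" using True by (cases w) auto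
      have "r \<noteq> []" using True w by auto
      then obtain r' b where r: "r = r' @ [b]" by (cases r rule: rev_cases) auto
      show ?thesis using "1.prems" w r by (auto simp: fr_Cons fr_append)
    qed
    then show ?thesis using True "1.IH" by (subst cyc_strip.simps) simp
  next
    case False
    then show ?thesis using "1.prems" by (subst cyc_strip.simps) (auto simp: cyc_reduced_def)
  qed
qed

lemma apply_aut_red: "cyc_reduced (apply_aut a w)"
  by (simp add: apply_aut_def cyc_reduce_def cyc_strip_red free_reduce_red)

lemma cyc_strip_id: "cyc_reduced w \<Longrightarrow> cyc_strip w = w"
  by (subst cyc_strip.simps) (auto simp: cyc_reduced_def)



fun oth :: "gen \<Rightarrow> gen" where "oth X = Y" | "oth Y = X"
lemma oth_neq[simp]: "oth g \<noteq> g" "g \<noteq> oth g" "oth (oth g) = g" by (cases g; simp)+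

definition pw :: "gen \<Rightarrow> int \<Rightarrow> word" where
  "pw h b = replicate (nat \<bar>b\<bar>) (h, b > 0)"

definition blk :: "gen \<Rightarrow> (bool \<times> int) list \<Rightarrow> word" where
  "blk g G = concat (map (\<lambda>(s,b). (g,s) # pw (oth g) b) G)"

fun aut_of :: "gen \<Rightarrow> bool \<Rightarrow> aut" where
  "aut_of X True = Sig" | "aut_of X False = SigInv" | "aut_of Y True = Tau" | "aut_of Y False = TauInv"

definition eps :: "bool \<Rightarrow> int" where "eps p = (if p then 1 else -1)"
definition pre :: "bool \<Rightarrow> bool \<Rightarrow> int" where "pre p s = (if s then 0 else - eps p)"
definition post :: "bool \<Rightarrow> bool \<Rightarrow> int" where "post p s = (if s then eps p else 0)"

definition compat :: "int \<Rightarrow> int \<Rightarrow> bool" where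
  "compat a b \<longleftrightarrow> (0 \<le> a \<and> 0 \<le> b) \<or> (a \<le> 0 \<and> b \<le> 0)"

lemma pw_0[simp]: "pw h 0 = []" by (simp add: pw_def)
lemma pw_Nil_iff[simp]: "pw h b = [] \<longleftrightarrow> b = 0" by (auto simp: pw_def)
lemma length_pw[simp]: "length (pw h b) = nat \<bar>b\<bar>" by (simp add: pw_def)
lemma set_pw: "x \<in> set (pw h b) \<Longrightarrow> x = (h, b > 0)" by (simp add: pw_def)
lemma nth_pw: "i < nat \<bar>b\<bar> \<Longrightarrow> pw h b ! i = (h, b > 0)" by (simp add: pw_def)
lemma hd_pw: "b \<noteq> 0 \<Longrightarrow> hd (pw h b) = (h, b > 0)"
  by (simp add: pw_def hd_replicate)
lemma last_pw: "b \<noteq> 0 \<Longrightarrow> last (pw h b) = (h, b > 0)"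
  by (simp add: pw_def last_replicate)

lemma pw_pos_Cons: "b > 0 \<Longrightarrow> pw h b = (h, True) # pw h (b - 1)"
proof -
  assume "b > 0"
  then have "nat \<bar>b\<bar> = Suc (nat \<bar>b - 1\<bar>)" by simp
  then show ?thesis using \<open>b > 0\<close> by (simp add: pw_def)
qed
lemma pw_neg_Cons: "b < 0 \<Longrightarrow> pw h b = (h, False) # pw h (b + 1)"
proof -
  assume "b < 0"
  then have "nat \<bar>b\<bar> = Suc (nat \<bar>b + 1\<bar>)" by simp
  then show ?thesis using \<open>b < 0\<close> by (simp add: pw_def)
qed
lemma pw_pos_snoc: "b > 0 \<Longrightarrow> pw h b = pw h (b - 1) @ [(h, True)]"
proof -
  assume "b > 0"
  then have "nat \<bar>b\<bar> = Suc (nat \<bar>b - 1\<bar>)" by simp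
  then show ?thesis using \<open>b > 0\<close> by (cases "b = 1") (simp_all add: pw_def replicate_append_same)
qed
lemma pw_neg_snoc: "b < 0 \<Longrightarrow> pw h b = pw h (b + 1) @ [(h, False)]"
proof -
  assume "b < 0"
  then have "nat \<bar>b\<bar> = Suc (nat \<bar>b + 1\<bar>)" by simp
  then show ?thesis using \<open>b < 0\<close> by (simp add: pw_def replicate_append_same)
qed

lemma pw_same: "compat x y \<Longrightarrow> pw h x @ pw h y = pw h (x + y)"
  unfolding compat_def pw_def
  by (cases "x = 0"; cases "y = 0"; auto simp: replicate_add[symmetric] nat_add_distrib)

lemma pw_red: "freely_reduced (pw h b)"
  unfolding freely_reduced_def by (simp add: pw_def)

lemma free_reduce_merge:
  "free_reduce (A @ pw h x @ pw h y @ B) = free_reduce (A @ pw h (x + y) @ B)"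
proof (induction "nat \<bar>x\<bar>" arbitrary: x y)
  case 0
  then show ?case by simp
next
  case (Suc n)
  show ?case
  proof (cases "compat x y")
    case True
    show ?thesis using pw_same[OF True, of h] by (metis append_assoc)
  next
    case False
    then consider "x > 0" "y < 0" | "x < 0" "y > 0" unfolding compat_def by linarith
    then show ?thesis
    proof cases
      case 1
      have "free_reduce (A @ pw h x @ pw h y @ B) =
            free_reduce ((A @ pw h (x - 1)) @ (h, True) # inv_letter (h, True) # pw h (y + 1) @ B)"
        using 1 by (simp add: pw_pos_snoc[of x] pw_neg_Cons[of y])
      also have "\<dots> = free_reduce (A @ pw h (x - 1) @ pw h (y + 1) @ B)"
        by (simp only: free_reduce_cancel) simp
      also have "\<dots> = free_reduce (A @ pw h (x + y) @ B)"
        using Suc.hyps(1)[of "x - 1" "y + 1"] Suc.hyps(2) 1 by simp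
      finally show ?thesis .
    next
      case 2
      have "free_reduce (A @ pw h x @ pw h y @ B) =
            free_reduce ((A @ pw h (x + 1)) @ (h, False) # inv_letter (h, False) # pw h (y - 1) @ B)"
        using 2 by (simp add: pw_neg_snoc[of x] pw_pos_Cons[of y])
      also have "\<dots> = free_reduce (A @ pw h (x + 1) @ pw h (y - 1) @ B)"
        by (simp only: free_reduce_cancel) simp
      also have "\<dots> = free_reduce (A @ pw h (x + y) @ B)"
        using Suc.hyps(1)[of "x + 1" "y - 1"] Suc.hyps(2) 2 by simp
      finally show ?thesis .
    qed
  qed
qed

lemma cyc_strip_pw:
  assumes "Z \<noteq> []" "fst (hd Z) \<noteq> h" "fst (last Z) \<noteq> h"
    and "a + b \<noteq> 0 \<or> last Z \<noteq> inv_letter (hd Z)"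
  shows "\<exists>a' b'. cyc_strip (pw h a @ Z @ pw h b) = pw h a' @ Z @ pw h b' \<and> a' + b' = a + b \<and> compat a' b'"
  using assms(4)
proof (induction "nat \<bar>a\<bar>" arbitrary: a b)
  case 0
  then have a0: "a = 0" by simp
  have "cyc_strip (Z @ pw h b) = Z @ pw h b"
  proof (cases "b = 0")
    case True
    then show ?thesis using 0 a0 assms(1) by (subst cyc_strip.simps) auto
  next
    case False
    have "last (Z @ pw h b) = (h, b > 0)" using False by (simp add: last_pw)
    moreover have "hd (Z @ pw h b) = hd Z" using assms(1) by simp
    ultimately show ?thesis using assms(2) by (subst cyc_strip.simps) (auto simp: inv_letter_def)
  qed
  then show ?case using a0 by (intro exI[of _ 0] exI[of _ b]) (auto simp: compat_def)
next
  case (Suc n)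
  show ?case
  proof (cases "compat a b")
    case True
    have a0: "a \<noteq> 0" using Suc.hyps by auto
    have hd: "hd (pw h a @ Z @ pw h b) = (h, a > 0)" using a0 by (simp add: hd_pw)
    have "last (pw h a @ Z @ pw h b) \<noteq> inv_letter (h, a > 0)"
    proof (cases "b = 0")
      case True
      then show ?thesis using assms(1,3) by (auto simp: inv_letter_def)
    next
      case False
      then show ?thesis using True a0 by (auto simp: last_pw compat_def)
    qed
    then have "cyc_strip (pw h a @ Z @ pw h b) = pw h a @ Z @ pw h b"
      using hd by (subst cyc_strip.simps) auto
    then show ?thesis using True by blast
  next
    case False
    then consider "a > 0" "b < 0" | "a < 0" "b > 0" unfolding compat_def by linarith
    then show ?thesis
    proof cases
      case 1
      have e: "pw h a @ Z @ pw h b = (h, True) # (pw h (a - 1) @ Z @ pw h (b + 1)) @ [(h, False)]"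
        using 1 by (simp add: pw_pos_Cons[of a] pw_neg_snoc[of b])
      have "cyc_strip (pw h a @ Z @ pw h b) = cyc_strip (pw h (a - 1) @ Z @ pw h (b + 1))"
        unfolding e by (subst cyc_strip.simps) (simp add: inv_letter_def butlast_append)
      moreover have "n = nat \<bar>a - 1\<bar>" using Suc.hyps(2) 1 by simp
      moreover have "a - 1 + (b + 1) \<noteq> 0 \<or> last Z \<noteq> inv_letter (hd Z)" using Suc.prems by simp
      ultimately show ?thesis using Suc.hyps(1)[of "a - 1" "b + 1"] by auto
    next
      case 2
      have e: "pw h a @ Z @ pw h b = (h, False) # (pw h (a + 1) @ Z @ pw h (b - 1)) @ [(h, True)]"
        using 2 by (simp add: pw_neg_Cons[of a] pw_pos_snoc[of b])
      have "cyc_strip (pw h a @ Z @ pw h b) = cyc_strip (pw h (a + 1) @ Z @ pw h (b - 1))"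
        unfolding e by (subst cyc_strip.simps) (simp add: inv_letter_def butlast_append)
      moreover have "n = nat \<bar>a + 1\<bar>" using Suc.hyps(2) 2 by simp
      moreover have "a + 1 + (b - 1) \<noteq> 0 \<or> last Z \<noteq> inv_letter (hd Z)" using Suc.prems by simp
      ultimately show ?thesis using Suc.hyps(1)[of "a + 1" "b - 1"] by auto
    qed
  qed
qed



lemma img_aut_of: "img (aut_of g p) (a, s) =
  (if a = g then pw (oth g) (pre p s) @ (g, s) # pw (oth g) (post p s) else [(a, s)])"
  by (cases g; cases p; cases a; cases s; simp add: pw_def pre_def post_def eps_def)

lemma img_other: "fst x \<noteq> g \<Longrightarrow> img (aut_of g p) x = [x]"
  by (cases x) (simp add: img_aut_of)

lemma concat_img_pw: "concat (map (img (aut_of g p)) (pw (oth g) c)) = pw (oth g) c"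
  by (simp add: pw_def img_aut_of)

lemma blk_Nil[simp]: "blk g [] = []" by (simp add: blk_def)
lemma blk_Cons: "blk g ((s, b) # r) = (g, s) # pw (oth g) b @ blk g r" by (simp add: blk_def)
lemma blk_append: "blk g (xs @ ys) = blk g xs @ blk g ys" by (simp add: blk_def)
lemma blk_Nil_iff[simp]: "blk g K = [] \<longleftrightarrow> K = []" by (cases K) (auto simp: blk_def)
lemma hd_blk: "K \<noteq> [] \<Longrightarrow> hd (blk g K) = (g, fst (hd K))"
  by (cases K) (auto simp: blk_Cons)

fun stp :: "bool \<Rightarrow> (bool \<times> int) list \<Rightarrow> (bool \<times> int) list" where
  "stp p [] = []"
| "stp p [(s, b)] = [(s, b + post p s)]"
| "stp p ((s, b) # (s', b') # r) = (s, b + post p s + pre p s') # stp p ((s', b') # r)"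

lemma length_stp[simp]: "length (stp p G) = length G"
  by (induction p G rule: stp.induct) auto

lemma stp_nth: "i < length G \<Longrightarrow> stp p G ! i = (fst (G ! i), snd (G ! i) + post p (fst (G ! i)) +
   (if Suc i < length G then pre p (fst (G ! Suc i)) else 0))"
proof (induction p G arbitrary: i rule: stp.induct)
  case (3 p s b s' b' r)
  then show ?case by (cases i) auto
qed auto

definition adjust :: "(bool \<times> int) list \<Rightarrow> int \<Rightarrow> (bool \<times> int) list" where
  "adjust G c = butlast G @ [(fst (last G), snd (last G) + c)]"

definition step :: "bool \<Rightarrow> (bool \<times> int) list \<Rightarrow> (bool \<times> int) list" where
  "step p K = map (\<lambda>i. (fst (K ! i), snd (K ! i) + post p (fst (K ! i))
       + pre p (fst (K ! ((i + 1) mod length K))))) [0..<length K]"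

definition valid :: "(bool \<times> int) list \<Rightarrow> bool" where
  "valid K \<longleftrightarrow> (\<forall>i < length K. snd (K ! i) = 0 \<longrightarrow> fst (K ! i) = fst (K ! ((i + 1) mod length K)))"

lemma length_adjust[simp]: "G \<noteq> [] \<Longrightarrow> length (adjust G c) = length G"
  by (simp add: adjust_def)

lemma adjust_nth: "G \<noteq> [] \<Longrightarrow> i < length G \<Longrightarrow> adjust G c ! i =
   (if Suc i = length G then (fst (G ! i), snd (G ! i) + c) else G ! i)"
proof (cases "Suc i = length G")
  case True
  assume "G \<noteq> []"
  have i: "i = length G - 1" using True by simp
  then have "last G = G ! i" using \<open>G \<noteq> []\<close> by (simp add: last_conv_nth)
  note i this
  then show ?thesis using True by (simp add: adjust_def nth_append)
next
  case False
  assume "i < length G"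
  then show ?thesis using False by (auto simp: adjust_def nth_append nth_butlast)
qed

lemma length_step[simp]: "length (step p K) = length K" by (simp add: step_def)

lemma step_nth: "i < length K \<Longrightarrow> step p K ! i = (fst (K ! i), snd (K ! i) + post p (fst (K ! i))
       + pre p (fst (K ! ((i + 1) mod length K))))"
  by (simp add: step_def)

lemma blk_red: "(\<forall>i. Suc i < length K \<longrightarrow> snd (K ! i) = 0 \<longrightarrow> fst (K ! i) = fst (K ! Suc i))
   \<Longrightarrow> freely_reduced (blk g K)"
proof (induction K)
  case Nil
  then show ?case by simp
next
  case (Cons a K)
  obtain s b where a: "a = (s, b)" by (cases a)
  have IH: "freely_reduced (blk g K)"
    using Cons.prems by (intro Cons.IH) (auto simp: a)
  have j: "K \<noteq> [] \<Longrightarrow> b = 0 \<Longrightarrow> fst (hd K) = s"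
    using Cons.prems[rule_format, of 0] by (auto simp: a hd_conv_nth)
  show ?case
  proof (cases "b = 0")
    case True
    then show ?thesis using IH j unfolding a blk_Cons
      by (cases K) (auto simp: fr_Cons hd_blk)
  next
    case False
    then show ?thesis using IH unfolding a blk_Cons
      by (auto simp: fr_Cons fr_append pw_red hd_blk last_pw hd_pw)
  qed
qed

lemma pre_post_diff: "s \<noteq> s' \<Longrightarrow> post p s + pre p s' = 0"
  by (cases s; cases s'; simp add: pre_def post_def)

lemma FR: "G \<noteq> [] \<Longrightarrow> free_reduce (A @ concat (map (img (aut_of g p)) (blk g G))) =
    free_reduce (A @ pw (oth g) (pre p (fst (hd G))) @ blk g (stp p G))"
proof (induction p G arbitrary: A rule: stp.induct)
  case (1 p)
  then show ?case by simp
next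
  case (2 p s b)
  have "free_reduce (A @ concat (map (img (aut_of g p)) (blk g [(s, b)]))) =
        free_reduce ((A @ pw (oth g) (pre p s) @ [(g, s)]) @ pw (oth g) (post p s) @ pw (oth g) b @ [])"
    by (simp add: blk_Cons img_aut_of concat_img_pw)
  also have "\<dots> = free_reduce ((A @ pw (oth g) (pre p s) @ [(g, s)]) @ pw (oth g) (post p s + b) @ [])"
    by (rule free_reduce_merge)
  finally show ?case by (simp add: blk_Cons add.commute)
next
  case (3 p s b s' b' r)
  let ?h = "oth g"
  have "free_reduce (A @ concat (map (img (aut_of g p)) (blk g ((s, b) # (s', b') # r)))) =
        free_reduce ((A @ pw ?h (pre p s) @ (g, s) # pw ?h (post p s) @ pw ?h b) @
            concat (map (img (aut_of g p)) (blk g ((s', b') # r))))"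
    by (simp add: blk_Cons[of g s b] img_aut_of concat_img_pw)
  also have "\<dots> = free_reduce ((A @ pw ?h (pre p s) @ (g, s) # pw ?h (post p s) @ pw ?h b) @
            pw ?h (pre p s') @ blk g (stp p ((s', b') # r)))"
    using 3(1)[of "A @ pw ?h (pre p s) @ (g, s) # pw ?h (post p s) @ pw ?h b"] by simp
  also have "\<dots> = free_reduce ((A @ pw ?h (pre p s) @ [(g, s)]) @ pw ?h (post p s) @ pw ?h b @
            (pw ?h (pre p s') @ blk g (stp p ((s', b') # r))))"
    by simp
  also have "\<dots> = free_reduce ((A @ pw ?h (pre p s) @ [(g, s)]) @ pw ?h (post p s + b) @
            (pw ?h (pre p s') @ blk g (stp p ((s', b') # r))))"
    by (rule free_reduce_merge)
  also have "\<dots> = free_reduce ((A @ pw ?h (pre p s) @ [(g, s)]) @ pw ?h (post p s + b + pre p s') @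
            blk g (stp p ((s', b') # r)))"
    by (rule free_reduce_merge)
  finally show ?case by (simp add: blk_Cons ac_simps)
qed



lemma fst_adjust_nth: "G \<noteq> [] \<Longrightarrow> i < length G \<Longrightarrow> fst (adjust G c ! i) = fst (G ! i)"
  by (simp add: adjust_nth)

lemma apply_rep:
  assumes G: "G \<noteq> []" and v: "valid (adjust G c)"
  shows "\<exists>c' G'. apply_aut (aut_of g p) (pw (oth g) c @ blk g G) = pw (oth g) c' @ blk g G'
     \<and> G' \<noteq> [] \<and> compat c' (snd (last G')) \<and> adjust G' c' = step p (adjust G c)"
proof -
  let ?h = "oth g"
  define t where "t = length G"
  define s1 where "s1 = fst (hd G)"
  define st where "st = fst (last G)"
  define bt where "bt = snd (last G)"
  have t0: "t > 0" using G by (simp add: t_def)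
  have s1n: "s1 = fst (G ! 0)" using G by (simp add: s1_def hd_conv_nth)
  have lastG: "last G = G ! (t - 1)" using G by (simp add: t_def last_conv_nth)
  have cm: "concat (map (img (aut_of g p)) (pw ?h c @ blk g G)) = pw ?h c @ concat (map (img (aut_of g p)) (blk g G))"
    by (simp add: concat_img_pw)
  have "free_reduce (concat (map (img (aut_of g p)) (pw ?h c @ blk g G)))
      = free_reduce (pw ?h c @ pw ?h (pre p s1) @ blk g (stp p G))"
    unfolding cm using FR[OF G, of "pw ?h c" g p] by (simp add: s1_def)
  also have "\<dots> = free_reduce ([] @ pw ?h (c + pre p s1) @ blk g (stp p G))"
    using free_reduce_merge[of "[]" ?h c "pre p s1" "blk g (stp p G)"] by simp
  also have "\<dots> = pw ?h (c + pre p s1) @ blk g (stp p G)"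
  proof -
    have "\<forall>i. Suc i < length (stp p G) \<longrightarrow> snd (stp p G ! i) = 0 \<longrightarrow> fst (stp p G ! i) = fst (stp p G ! Suc i)"
    proof (intro allI impI)
      fix i assume i: "Suc i < length (stp p G)" and z: "snd (stp p G ! i) = 0"
      show "fst (stp p G ! i) = fst (stp p G ! Suc i)"
      proof (rule ccontr)
        assume ne: "fst (stp p G ! i) \<noteq> fst (stp p G ! Suc i)"
        then have ne': "fst (G ! i) \<noteq> fst (G ! Suc i)" using i by (simp add: stp_nth)
        then have "snd (G ! i) = 0" using z i pre_post_diff[OF ne', of p] by (simp add: stp_nth)
        then have "snd (adjust G c ! i) = 0" using i G by (simp add: adjust_nth)
        then have "fst (adjust G c ! i) = fst (adjust G c ! ((i + 1) mod length (adjust G c)))"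
          using v i G unfolding valid_def by simp
        then show False using ne' i G by (simp add: fst_adjust_nth)
      qed
    qed
    then have "freely_reduced (blk g (stp p G))" by (rule blk_red)
    moreover have "hd (blk g (stp p G)) = (g, fst (hd (stp p G)))"
      using G by (intro hd_blk) (metis length_stp length_0_conv)
    ultimately have "freely_reduced (pw ?h (c + pre p s1) @ blk g (stp p G))"
      using G by (auto simp: fr_append pw_red last_pw)
    then show ?thesis by (simp add: free_reduce_id)
  qed
  finally have fr: "free_reduce (concat (map (img (aut_of g p)) (pw ?h c @ blk g G))) =
      pw ?h (c + pre p s1) @ blk g (stp p G)" .
  define B where "B = butlast (stp p G)"
  have lst: "last (stp p G) = (st, bt + post p st)"
  proof -
    have "stp p G \<noteq> []" using G by (metis length_stp length_0_conv)
    then have "last (stp p G) = stp p G ! (t - 1)" by (simp add: last_conv_nth t_def)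
    then show ?thesis using t0 lastG by (simp add: stp_nth t_def st_def bt_def)
  qed
  have sG: "stp p G = B @ [(st, bt + post p st)]"
  proof -
    have "stp p G \<noteq> []" using G by (metis length_stp length_0_conv)
    then show ?thesis unfolding B_def using lst by (metis append_butlast_last_id)
  qed
  have lenB: "length B = t - 1" by (simp add: B_def t_def)
  have Bnth: "i < t - 1 \<Longrightarrow> B ! i = stp p G ! i" for i
    by (simp add: B_def nth_butlast t_def)
  define Z where "Z = blk g B @ [(g, st)]"
  have W: "pw ?h (c + pre p s1) @ blk g (stp p G) = pw ?h (c + pre p s1) @ Z @ pw ?h (bt + post p st)"
    by (simp add: sG Z_def blk_append blk_Cons)
  have hdZ: "hd Z = (g, s1)"
  proof (cases "B = []")
    case True
    then have "t = 1" using lenB t0 by simp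
    then have "st = s1" using lastG s1n by (simp add: st_def)
    then show ?thesis using True by (simp add: Z_def)
  next
    case False
    then have "hd B = B ! 0" by (simp add: hd_conv_nth)
    moreover have "0 < t - 1" using False lenB by (cases B) auto
    ultimately have "fst (hd B) = s1" using Bnth[of 0] t0 by (simp add: stp_nth t_def s1n)
    then show ?thesis using False by (simp add: Z_def hd_blk)
  qed
  have cond: "(c + pre p s1) + (bt + post p st) \<noteq> 0 \<or> last Z \<noteq> inv_letter (hd Z)"
  proof (cases "st = s1")
    case True
    have "last Z = (g, st)" by (simp add: Z_def)
    then show ?thesis using True hdZ by simp
  next
    case False
    have "post p st + pre p s1 = 0" using pre_post_diff[OF False] .
    moreover have "bt + c \<noteq> 0"
    proof
      assume "bt + c = 0"
      then have "snd (adjust G c ! (t - 1)) = 0" using G t0 by (simp add: adjust_nth t_def bt_def lastG)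
      then have "fst (adjust G c ! (t - 1)) = fst (adjust G c ! ((t - 1 + 1) mod t))"
        using v G t0 unfolding valid_def by (simp add: t_def)
      then show False using False G t0 by (simp add: fst_adjust_nth t_def st_def lastG s1n)
    qed
    ultimately show ?thesis by simp
  qed
  obtain a' b' where ab: "cyc_strip (pw ?h (c + pre p s1) @ Z @ pw ?h (bt + post p st)) = pw ?h a' @ Z @ pw ?h b'"
    "a' + b' = (c + pre p s1) + (bt + post p st)" "compat a' b'"
  proof -
    have "Z \<noteq> []" "fst (hd Z) \<noteq> ?h" "fst (last Z) \<noteq> ?h" using hdZ by (auto simp: Z_def)
    then show ?thesis using cyc_strip_pw[of Z ?h "c + pre p s1" "bt + post p st"] cond that by blast
  qed
  define G' where "G' = B @ [(st, b')]"
  have res: "apply_aut (aut_of g p) (pw ?h c @ blk g G) = pw ?h a' @ blk g G'"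
    unfolding apply_aut_def cyc_reduce_def fr W ab(1) by (simp add: G'_def Z_def blk_append blk_Cons)
  have adj: "adjust G' a' = step p (adjust G c)"
  proof (rule nth_equalityI)
    show "length (adjust G' a') = length (step p (adjust G c))"
      using G t0 by (simp add: G'_def adjust_def lenB t_def)
  next
    fix i assume "i < length (adjust G' a')"
    then have i: "i < t" using t0 by (simp add: G'_def adjust_def lenB)
    have stepi: "step p (adjust G c) ! i = (fst (adjust G c ! i), snd (adjust G c ! i) + post p (fst (adjust G c ! i))
       + pre p (fst (adjust G c ! ((i + 1) mod t))))"
      using i G by (simp add: step_nth t_def)
    show "adjust G' a' ! i = step p (adjust G c) ! i"
    proof (cases "i = t - 1")
      case True
      have "adjust G' a' ! i = (st, b' + a')" using True lenB by (simp add: G'_def adjust_def nth_append)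
      moreover have "(i + 1) mod t = 0" using True t0 by simp
      ultimately show ?thesis using stepi True G t0 ab(2)
        by (cases "length G = 1") (auto simp: adjust_nth t_def st_def bt_def lastG s1n)
    next
      case False
      then have i1: "i < t - 1" using i by simp
      have "adjust G' a' ! i = B ! i" using i1 lenB by (simp add: G'_def adjust_def nth_append)
      also have "\<dots> = stp p G ! i" using i1 by (rule Bnth)
      finally have e: "adjust G' a' ! i = stp p G ! i" .
      moreover have "Suc i < length G" "Suc i mod length G = Suc i" using i1 by (auto simp: t_def)
      ultimately show ?thesis using stepi i1 G by (simp add: stp_nth adjust_nth t_def)
    qed
  qed
  show ?thesis
    using res adj ab(3) by (intro exI[of _ a'] exI[of _ G']) (simp add: G'_def)
qed



definition badg :: "gen \<Rightarrow> bool \<Rightarrow> word \<Rightarrow> nat \<Rightarrow> bool" where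
  "badg g p u j \<longleftrightarrow> j < length u \<and> fst (u ! j) = oth g \<and>
    (\<exists>d1 d2. 1 \<le> d1 \<and> 1 \<le> d2 \<and> d1 + d2 \<le> length u \<and>
      u ! ((j + (length u - d1)) mod length u) = (g, snd (u ! j) \<noteq> p) \<and>
      u ! ((j + d2) mod length u) = (g, snd (u ! j) \<noteq> p) \<and>
      (\<forall>d. 0 < d \<and> d < d1 \<longrightarrow> fst (u ! ((j + (length u - d)) mod length u)) = oth g) \<and>
      (\<forall>d. 0 < d \<and> d < d2 \<longrightarrow> fst (u ! ((j + d) mod length u)) = oth g))"

definition meas :: "gen \<Rightarrow> bool \<Rightarrow> word \<Rightarrow> nat" where
  "meas g p u = (\<Sum>j<length u. if badg g p u j then 1 else 0)"

lemma rot_nth: "0 < length u \<Longrightarrow> rotate q u ! (k mod length u) = u ! ((k + q) mod length u)"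
proof -
  assume n: "0 < length u"
  have "(q + k mod length u) mod length u = (k + q) mod length u"
    by (metis add.commute mod_add_left_eq)
  then show ?thesis using n by (simp add: nth_rotate)
qed

lemma badg_rotate:
  assumes j: "j < length u"
  shows "badg g p (rotate q u) j = badg g p u ((j + q) mod length u)"
proof -
  let ?n = "length u"
  have n: "0 < ?n" using j by linarith
  have R: "rotate q u ! (k mod ?n) = u ! ((k + q) mod ?n)" for k using rot_nth[OF n] .
  have Rj: "rotate q u ! j = u ! ((j + q) mod ?n)" using R[of j] j by simp
  have M: "((j + q) mod ?n + x) mod ?n = (j + x + q) mod ?n" for x
    by (metis add.commute add.left_commute mod_add_left_eq)
  show ?thesis
    unfolding badg_def length_rotate Rj R M using j n by simp
qed

lemma sum_rot1: "(\<Sum>j<n. f ((j + 1) mod n)) = (\<Sum>j<(n::nat). (f j :: nat))"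
proof (cases n)
  case 0
  then show ?thesis by simp
next
  case (Suc m)
  have "(\<Sum>j<Suc m. f ((j + 1) mod Suc m)) = (\<Sum>j<m. f ((j + 1) mod Suc m)) + f ((m + 1) mod Suc m)"
    by simp
  also have "(\<Sum>j<m. f ((j + 1) mod Suc m)) = (\<Sum>j<m. f (Suc j))"
    by (intro sum.cong) auto
  finally have "(\<Sum>j<Suc m. f ((j + 1) mod Suc m)) = (\<Sum>j<m. f (Suc j)) + f 0" by simp
  also have "\<dots> = (\<Sum>j<Suc m. f j)" by (simp only: sum.lessThan_Suc_shift add.commute)
  finally show ?thesis using Suc by simp
qed

lemma meas_rotate1: "meas g p (rotate1 u) = meas g p u"
proof -
  have "meas g p (rotate1 u) = (\<Sum>j<length u. if badg g p (rotate 1 u) j then 1 else 0)"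
    by (simp add: meas_def)
  also have "\<dots> = (\<Sum>j<length u. if badg g p u ((j + 1) mod length u) then 1 else 0)"
    by (intro sum.cong) (auto simp: badg_rotate[where q=1, simplified])
  also have "\<dots> = meas g p u"
    unfolding meas_def by (rule sum_rot1[where f = "\<lambda>j. if badg g p u j then 1 else 0"])
  finally show ?thesis .
qed

lemma meas_rotate: "meas g p (rotate q u) = meas g p u"
  by (induction q) (simp_all add: meas_rotate1)

lemma sum_lessThan_add: "(\<Sum>j<a + (b::nat). f j) = (\<Sum>j<a. f j) + (\<Sum>m<b. (f (a + m) :: nat))"
  by (induction b arbitrary: f) (simp_all add: add.assoc)

lemma sum_concat: "(\<Sum>j<length (concat xss). f j) =
   (\<Sum>i<length xss. \<Sum>m<length (xss ! i). (f (length (concat (take i xss)) + m) :: nat))"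
proof (induction xss rule: rev_induct)
  case Nil
  then show ?case by simp
next
  case (snoc xs xss)
  let ?L = "length (concat xss)"
  have "(\<Sum>j<length (concat (xss @ [xs])). f j) = (\<Sum>j<?L + length xs. f j)" by simp
  also have "\<dots> = (\<Sum>j<?L. f j) + (\<Sum>m<length xs. f (?L + m))"
    by (rule sum_lessThan_add)
  also have "(\<Sum>j<?L. f j) = (\<Sum>i<length xss. \<Sum>m<length (xss ! i). f (length (concat (take i xss)) + m))"
    by (rule snoc.IH)
  also have "\<dots> = (\<Sum>i<length xss. \<Sum>m<length ((xss @ [xs]) ! i). f (length (concat (take i (xss @ [xs]))) + m))"
    by (intro sum.cong) (auto simp: nth_append)
  finally show ?case by (simp add: sum.lessThan_Suc)
qed



lemma length_blk_Cons: "length (blk x ((s, b) # rest)) = Suc (nat \<bar>b\<bar>) + length (blk x rest)"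
  by (simp add: blk_Cons)

lemma blk_front0: "blk x ((s, b) # rest) ! 0 = (x, s)"
  by (simp add: blk_Cons)

lemma blk_front_mid: "1 \<le> m \<Longrightarrow> m \<le> nat \<bar>b\<bar> \<Longrightarrow> blk x ((s, b) # rest) ! m = (oth x, b > 0)"
  by (cases m) (auto simp: blk_Cons nth_append nth_pw)

lemma blk_front_next:
  "blk x ((s, b) # rest) ! ((1 + nat \<bar>b\<bar>) mod length (blk x ((s, b) # rest)))
     = (x, fst (((s, b) # rest) ! (1 mod length ((s, b) # rest))))"
proof (cases rest)
  case Nil
  then show ?thesis by (simp add: blk_Cons)
next
  case (Cons r rs)
  obtain s' b' where r: "r = (s', b')" by (cases r)
  have "(1 + nat \<bar>b\<bar>) mod length (blk x ((s, b) # rest)) = 1 + nat \<bar>b\<bar>"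
    using Cons r by (simp add: blk_Cons)
  then show ?thesis using Cons r by (simp add: blk_Cons nth_append)
qed

lemma last_blk: "K \<noteq> [] \<Longrightarrow> last (blk h K) =
   (if snd (last K) \<noteq> 0 then (oth h, snd (last K) > 0) else (h, fst (last K)))"
proof -
  assume K: "K \<noteq> []"
  obtain s b where l: "last K = (s, b)" by (cases "last K")
  have "K = butlast K @ [(s, b)]" using K l by (metis append_butlast_last_id)
  then have "blk h K = blk h (butlast K) @ (h, s) # pw (oth h) b"
    by (metis blk_append blk_Cons blk_Nil append_Nil2)
  then show ?thesis using l by (auto simp: last_pw)
qed

lemma rotate_blk: "i < length K \<Longrightarrow> rotate (length (blk x (take i K))) (blk x K) = blk x (rotate i K)"
proof -
  assume i: "i < length K"
  have "blk x K = blk x (take i K) @ blk x (drop i K)"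
    by (metis append_take_drop_id blk_append)
  then have "rotate (length (blk x (take i K))) (blk x K) = blk x (drop i K) @ blk x (take i K)"
    by (metis rotate_append)
  also have "\<dots> = blk x (rotate i K)"
    using i by (simp add: rotate_drop_take blk_append)
  finally show ?thesis .
qed

lemma meas_blk_split: "meas g p (blk x K) = (\<Sum>i<length K. \<Sum>m<Suc (nat \<bar>snd (K ! i)\<bar>).
     if badg g p (blk x (rotate i K)) m then 1 else 0)"
proof -
  define L where "L = map (\<lambda>(s, b). (x, s) # pw (oth x) b) K"
  have bl: "blk x K = concat L" by (simp add: L_def blk_def)
  have tk: "concat (take i L) = blk x (take i K)" for i by (simp add: L_def blk_def take_map)
  have lenL: "i < length K \<Longrightarrow> length (L ! i) = Suc (nat \<bar>snd (K ! i)\<bar>)" for i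
    by (simp add: L_def split: prod.splits)
  have "meas g p (blk x K) = (\<Sum>j<length (concat L). if badg g p (blk x K) j then 1 else 0)"
    by (simp add: meas_def bl)
  also have "\<dots> = (\<Sum>i<length L. \<Sum>m<length (L ! i).
       if badg g p (blk x K) (length (concat (take i L)) + m) then 1 else 0)"
    by (rule sum_concat)
  also have "\<dots> = (\<Sum>i<length K. \<Sum>m<Suc (nat \<bar>snd (K ! i)\<bar>).
     if badg g p (blk x (rotate i K)) m then 1 else 0)"
  proof (rule sum.cong)
    show "{..<length L} = {..<length K}" by (simp add: L_def)
  next
    fix i assume "i \<in> {..<length K}"
    then have i: "i < length K" by simp
    have E: "badg g p (blk x K) (length (concat (take i L)) + m) = badg g p (blk x (rotate i K)) m"
      if m: "m < length (L ! i)" for m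
    proof -
      have "length (concat (take i L)) + length (L ! i) = length (concat (take (Suc i) L))"
        using i by (simp add: take_Suc_conv_app_nth L_def)
      also have "\<dots> \<le> length (concat L)"
        by (metis append_take_drop_id concat_append le_add1 length_append)
      finally have lt: "length (concat (take i L)) + m < length (blk x K)" using m bl by simp
      have "badg g p (blk x (rotate i K)) m =
            badg g p (rotate (length (blk x (take i K))) (blk x K)) m"
        using rotate_blk[OF i] by simp
      also have "\<dots> = badg g p (blk x K) ((m + length (blk x (take i K))) mod length (blk x K))"
        using badg_rotate[of m "blk x K" g p] lt by simp
      also have "\<dots> = badg g p (blk x K) (length (concat (take i L)) + m)"
        using lt by (simp add: tk add.commute)
      finally show ?thesis by simp
    qed
    show "(\<Sum>m<length (L ! i). if badg g p (blk x K) (length (concat (take i L)) + m) then 1 else 0) =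
          (\<Sum>m<Suc (nat \<bar>snd (K ! i)\<bar>). if badg g p (blk x (rotate i K)) m then 1 else (0::nat))"
      using lenL[OF i] E by (intro sum.cong) auto
  qed
  finally show ?thesis .
qed

lemma rotate_nth0: "i < length K \<Longrightarrow> rotate i K ! 0 = K ! i"
  using nth_rotate[of 0 K i] by (cases K) auto
lemma rotate_nth1: "i < length K \<Longrightarrow> rotate i K ! (1 mod length K) = K ! ((i + 1) mod length K)"
proof -
  assume i: "i < length K"
  have "1 mod length K < length K" using i by simp
  then have "rotate i K ! (1 mod length K) = K ! ((1 mod length K + i) mod length K)"
    by (simp add: nth_rotate)
  also have "(1 mod length K + i) mod length K = (i + 1) mod length K"
    by (metis add.commute mod_add_left_eq)
  finally show ?thesis .
qed



definition gapbad :: "bool \<Rightarrow> bool \<Rightarrow> int \<Rightarrow> bool \<Rightarrow> bool" where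
  "gapbad p s b s' \<longleftrightarrow> s = s' \<and> b \<noteq> 0 \<and> s = ((b > 0) \<noteq> p)"

definition MG :: "bool \<Rightarrow> (bool \<times> int) list \<Rightarrow> nat" where
  "MG p K = (\<Sum>i<length K. if gapbad p (fst (K ! i)) (snd (K ! i)) (fst (K ! ((i + 1) mod length K)))
      then nat \<bar>snd (K ! i)\<bar> else 0)"

lemma gap_bad:
  assumes mb: "m \<le> nat \<bar>b\<bar>"
  shows "badg g p (blk g ((s, b) # rest)) m \<longleftrightarrow>
    (1 \<le> m \<and> gapbad p s b (fst (((s, b) # rest) ! (1 mod length ((s, b) # rest)))))"
proof -
  define u where "u = blk g ((s, b) # rest)"
  define n where "n = length u"
  define N where "N = nat \<bar>b\<bar>"
  define s' where "s' = fst (((s, b) # rest) ! (1 mod length ((s, b) # rest)))"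
  define P where "P = (1 + N) mod n"
  have nN: "1 + N \<le> n" by (simp add: n_def u_def N_def length_blk_Cons)
  have u0: "u ! 0 = (g, s)" by (simp add: u_def blk_front0)
  have um: "1 \<le> k \<Longrightarrow> k \<le> N \<Longrightarrow> u ! k = (oth g, b > 0)" for k
    by (simp add: u_def N_def blk_front_mid)
  have uP: "u ! P = (g, s')" unfolding u_def P_def n_def N_def s'_def by (rule blk_front_next)
  show ?thesis
  proof (cases "m = 0")
    case True
    then show ?thesis using u0 by (simp add: badg_def u_def[symmetric])
  next
    case False
    then have m1: "1 \<le> m" and mN: "m \<le> N" using mb by (auto simp: N_def)
    have umm: "u ! m = (oth g, b > 0)" using um m1 mN by simp
    define S where "S = ((b > 0) \<noteq> p)"
    have mn: "m < n" using mN nN by simp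
    have L: "0 < d \<Longrightarrow> d \<le> m \<Longrightarrow> (m + (n - d)) mod n = m - d" for d
    proof -
      assume "0 < d" "d \<le> m"
      then have "m + (n - d) = (m - d) + n" using mn by simp
      then have "(m + (n - d)) mod n = (m - d + n) mod n" by simp
      also have "\<dots> = m - d" using mn by simp
      finally show ?thesis .
    qed
    have Rr: "d \<le> N - m \<Longrightarrow> (m + d) mod n = m + d" for d using mN nN by simp
    have "badg g p u m \<longleftrightarrow> gapbad p s b s'"
    proof
      assume bad: "badg g p u m"
      then obtain d1 d2 where d: "1 \<le> d1" "1 \<le> d2" "d1 + d2 \<le> n"
        "u ! ((m + (n - d1)) mod n) = (g, S)" "u ! ((m + d2) mod n) = (g, S)"
        "\<forall>d. 0 < d \<and> d < d1 \<longrightarrow> fst (u ! ((m + (n - d)) mod n)) = oth g"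
        "\<forall>d. 0 < d \<and> d < d2 \<longrightarrow> fst (u ! ((m + d) mod n)) = oth g"
        unfolding badg_def n_def[symmetric] umm S_def by auto
      have d1m: "d1 = m"
      proof (rule ccontr)
        assume "d1 \<noteq> m"
        then consider "d1 < m" | "m < d1" by linarith
        then show False
        proof cases
          case 1
          then have "u ! ((m + (n - d1)) mod n) = (oth g, b > 0)" using L[of d1] d(1) um[of "m - d1"] mN by simp
          then show False using d(4) by simp
        next
          case 2
          then have "fst (u ! ((m + (n - m)) mod n)) = oth g" using d(6) m1 by simp
          moreover have "(m + (n - m)) mod n = 0" using mn by simp
          ultimately show False using u0 by simp
        qed
      qed
      have d2m: "d2 = 1 + N - m"
      proof (rule ccontr)
        assume "d2 \<noteq> 1 + N - m"
        then consider "d2 < 1 + N - m" | "1 + N - m < d2" by linarith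
        then show False
        proof cases
          case 1
          then have "u ! ((m + d2) mod n) = (oth g, b > 0)" using Rr[of d2] um[of "m + d2"] d(2) by simp
          then show False using d(5) by simp
        next
          case 2
          then have "fst (u ! ((m + (1 + N - m)) mod n)) = oth g" using d(7)[rule_format, of "1 + N - m"] mN by simp
          moreover have "m + (1 + N - m) = 1 + N" using mN by simp
          ultimately show False using uP by (simp add: P_def)
        qed
      qed
      have "u ! 0 = (g, S)" using d(4) d1m mn by simp
      moreover have "u ! P = (g, S)" using d(5) d2m mN by (simp add: P_def)
      moreover have "b \<noteq> 0" using m1 mN by (auto simp: N_def)
      ultimately show "gapbad p s b s'" using u0 uP by (simp add: gapbad_def S_def)
    next
      assume gb: "gapbad p s b s'"
      then have sS: "s = S" "s' = S" "b \<noteq> 0" by (auto simp: gapbad_def S_def)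
      have A: "\<forall>d. 0 < d \<and> d < m \<longrightarrow> fst (u ! ((m + (n - d)) mod n)) = oth g"
        using L um mN by auto
      have B: "\<forall>d. 0 < d \<and> d < 1 + N - m \<longrightarrow> fst (u ! ((m + d) mod n)) = oth g"
        using Rr um by auto
      have C: "u ! ((m + (n - m)) mod n) = (g, S)" using mn u0 sS by simp
      have D: "u ! ((m + (1 + N - m)) mod n) = (g, S)" using mN uP sS by (simp add: P_def)
      have umS: "(snd (u ! m) \<noteq> p) = S" by (simp add: umm S_def)
      show "badg g p u m" unfolding badg_def n_def[symmetric] umS
        using mn umm m1 mN nN A B C D by (intro conjI exI[of _ m] exI[of _ "1 + N - m"]) auto
    qed
    then show ?thesis using m1 by (simp add: u_def s'_def)
  qed
qed

lemma meas_blk_g: "meas g p (blk g K) = MG p K"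
proof -
  have "meas g p (blk g K) = (\<Sum>i<length K. \<Sum>m<Suc (nat \<bar>snd (K ! i)\<bar>).
     if badg g p (blk g (rotate i K)) m then 1 else 0)" by (rule meas_blk_split)
  also have "\<dots> = MG p K" unfolding MG_def
  proof (rule sum.cong)
    fix i assume "i \<in> {..<length K}"
    then have i: "i < length K" by simp
    have ne: "rotate i K \<noteq> []" using i by (cases K) auto
    then obtain s b rest where R: "rotate i K = (s, b) # rest"
      by (metis list.exhaust surj_pair)
    have Ki: "K ! i = (s, b)" using rotate_nth0[OF i] R by simp
    have Kn: "fst (((s, b) # rest) ! (1 mod length ((s, b) # rest))) = fst (K ! ((i + 1) mod length K))"
      using rotate_nth1[OF i] R by (metis length_rotate)
    have "(\<Sum>m<Suc (nat \<bar>b\<bar>). if badg g p (blk g ((s, b) # rest)) m then 1 else 0) =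
        (\<Sum>m<Suc (nat \<bar>b\<bar>). if 1 \<le> m \<and> gapbad p s b (fst (K ! ((i + 1) mod length K))) then 1 else (0::nat))"
      using gap_bad[where rest = rest and s = s and g = g and p = p] Kn by (intro sum.cong) auto
    also have "\<dots> = (if gapbad p s b (fst (K ! ((i + 1) mod length K))) then nat \<bar>b\<bar> else 0)"
      by (simp add: sum.lessThan_Suc_shift del: sum.lessThan_Suc)
    finally show "(\<Sum>m<Suc (nat \<bar>snd (K ! i)\<bar>). if badg g p (blk g (rotate i K)) m then 1 else 0) =
        (if gapbad p (fst (K ! i)) (snd (K ! i)) (fst (K ! ((i + 1) mod length K))) then nat \<bar>snd (K ! i)\<bar> else 0)"
      using R Ki by simp
  qed simp
  finally show ?thesis .
qed



lemma gap_step: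
  "gapbad p s (b + post p s + pre p s') s' \<Longrightarrow> gapbad p s b s' \<and> nat \<bar>b + post p s + pre p s'\<bar> + 1 \<le> nat \<bar>b\<bar>"
  by (cases s; cases s'; cases p; auto simp: gapbad_def pre_def post_def eps_def)

lemma MG_step: "MG p (step p K) \<le> MG p K - 1"
proof -
  let ?t = "length K"
  define tm where "tm i = (if gapbad p (fst (K ! i)) (snd (K ! i)) (fst (K ! ((i + 1) mod ?t))) then nat \<bar>snd (K ! i)\<bar> else 0)" for i
  define tm' where "tm' i = (if gapbad p (fst (step p K ! i)) (snd (step p K ! i)) (fst (step p K ! ((i + 1) mod ?t)))
      then nat \<bar>snd (step p K ! i)\<bar> else 0)" for i
  define gb where "gb i = (if gapbad p (fst (K ! i)) (snd (K ! i)) (fst (K ! ((i + 1) mod ?t))) then 1 else (0::nat))" for i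
  have MGK: "MG p K = (\<Sum>i<?t. tm i)" by (simp add: MG_def tm_def)
  have MGs: "MG p (step p K) = (\<Sum>i<?t. tm' i)" by (simp add: MG_def tm'_def)
  have loc: "tm' i + gb i \<le> tm i" if i: "i < ?t" for i
  proof -
    have t0: "0 < ?t" using i by linarith
    have m: "(i + 1) mod ?t < ?t" using t0 by simp
    have e: "step p K ! i = (fst (K ! i), snd (K ! i) + post p (fst (K ! i)) + pre p (fst (K ! ((i + 1) mod ?t))))"
      using i by (simp add: step_nth)
    have e2: "fst (step p K ! ((i + 1) mod ?t)) = fst (K ! ((i + 1) mod ?t))"
      using m by (simp add: step_nth)
    define s where "s = fst (K ! i)"
    define b where "b = snd (K ! i)"
    define s' where "s' = fst (K ! ((i + 1) mod ?t))"
    have *: "(if gapbad p s (b + post p s + pre p s') s' then nat \<bar>b + post p s + pre p s'\<bar> else 0)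
        + (if gapbad p s b s' then 1 else 0) \<le> (if gapbad p s b s' then nat \<bar>b\<bar> else 0)"
    proof (cases "gapbad p s (b + post p s + pre p s') s'")
      case True
      then show ?thesis using gap_step[OF True] by simp
    next
      case False
      have "gapbad p s b s' \<Longrightarrow> 1 \<le> nat \<bar>b\<bar>" by (auto simp: gapbad_def)
      then show ?thesis using False by simp
    qed
    show ?thesis
      unfolding tm_def tm'_def gb_def e e2 prod.sel s_def[symmetric] b_def[symmetric] s'_def[symmetric] by (rule *)
  qed
  have "(\<Sum>i<?t. tm' i) + (\<Sum>i<?t. gb i) \<le> (\<Sum>i<?t. tm i)"
  proof -
    have "(\<Sum>i<?t. tm' i + gb i) \<le> (\<Sum>i<?t. tm i)" using loc by (intro sum_mono) simp
    then show ?thesis by (simp add: sum.distrib)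
  qed
  moreover have "(\<Sum>i<?t. tm i) > 0 \<Longrightarrow> (\<Sum>i<?t. gb i) \<ge> 1"
  proof -
    assume "(\<Sum>i<?t. tm i) > 0"
    have "\<exists>i<?t. tm i > 0"
    proof (rule ccontr)
      assume "\<not> (\<exists>i<?t. tm i > 0)"
      then have "\<forall>i\<in>{..<?t}. tm i = 0" by auto
      then have "(\<Sum>i<?t. tm i) = 0" by simp
      then show False using \<open>(\<Sum>i<?t. tm i) > 0\<close> by simp
    qed
    then obtain i where i: "i < ?t" "tm i > 0" by blast
    then have "gb i = 1" by (simp add: tm_def gb_def split: if_splits)
    then have "gb i \<le> (\<Sum>i<?t. gb i)" using i by (intro member_le_sum) auto
    then show ?thesis using \<open>gb i = 1\<close> by simp
  qed
  ultimately show ?thesis using MGK MGs by (cases "(\<Sum>i<?t. tm i) > 0") auto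
qed

lemma L2r: "badg g p v 0 \<Longrightarrow> 1 < length v \<Longrightarrow> v ! 1 = (g, x) \<Longrightarrow> x = (snd (v ! 0) \<noteq> p)"
proof -
  assume b: "badg g p v 0" and n: "1 < length v" and v1: "v ! 1 = (g, x)"
  then obtain d2 where d: "1 \<le> d2" "v ! (d2 mod length v) = (g, snd (v ! 0) \<noteq> p)"
     "\<forall>d. 0 < d \<and> d < d2 \<longrightarrow> fst (v ! (d mod length v)) = oth g"
    unfolding badg_def by auto
  show ?thesis
  proof (cases "d2 = 1")
    case True
    then show ?thesis using d(2) v1 n by simp
  next
    case False
    then have "fst (v ! (1 mod length v)) = oth g" using d(1) d(3)[rule_format, of 1] by simp
    then show ?thesis using v1 n by simp
  qed
qed

lemma L2l: "badg g p v 0 \<Longrightarrow> 1 < length v \<Longrightarrow> v ! (length v - 1) = (g, x) \<Longrightarrow> x = (snd (v ! 0) \<noteq> p)"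
proof -
  assume b: "badg g p v 0" and n: "1 < length v" and v1: "v ! (length v - 1) = (g, x)"
  then obtain d1 where d: "1 \<le> d1" "v ! ((length v - d1) mod length v) = (g, snd (v ! 0) \<noteq> p)"
     "\<forall>d. 0 < d \<and> d < d1 \<longrightarrow> fst (v ! ((length v - d) mod length v)) = oth g"
    unfolding badg_def by auto
  show ?thesis
  proof (cases "d1 = 1")
    case True
    then show ?thesis using d(2) v1 n by simp
  next
    case False
    then have "fst (v ! ((length v - 1) mod length v)) = oth g" using d(1,3) by simp
    then show ?thesis using v1 n by simp
  qed
qed

lemma L3: "1 < length v \<Longrightarrow> fst (v ! 0) = oth g \<Longrightarrow> v ! 1 = (g, S) \<Longrightarrow> v ! (length v - 1) = (g, S)
   \<Longrightarrow> S = (snd (v ! 0) \<noteq> p) \<Longrightarrow> badg g p v 0"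
  unfolding badg_def by (intro conjI exI[of _ 1]) auto

lemma arith_r: "\<not> (a \<noteq> 0 \<and> (a > 0) = (e \<noteq> p)) \<Longrightarrow> (a = 0 \<longrightarrow> e = e1) \<Longrightarrow>
   a + post p e + pre p e1 \<noteq> 0 \<and> (a + post p e + pre p e1 > 0) \<noteq> (e \<noteq> p)"
  by (cases e; cases e1; cases p; auto simp: pre_def post_def eps_def)

lemma arith_l: "\<not> (al \<noteq> 0 \<and> (al > 0) = (e \<noteq> p)) \<Longrightarrow> (al = 0 \<longrightarrow> el = e) \<Longrightarrow>
   al + post p el + pre p e \<noteq> 0 \<and> (al + post p el + pre p e > 0) \<noteq> (e \<noteq> p)"
  by (cases e; cases el; cases p; auto simp: pre_def post_def eps_def)



lemma mod_rot_aux: "((j + i) mod t + 1) mod t = ((j + 1) mod t + i) mod (t::nat)"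
proof -
  have "((j + i) mod t + 1) mod t = (j + i + 1) mod t" by (rule mod_add_left_eq)
  moreover have "((j + 1) mod t + i) mod t = (j + 1 + i) mod t" by (rule mod_add_left_eq)
  ultimately show ?thesis by (simp add: ac_simps)
qed

lemma step_rotate: "rotate i (step p K) = step p (rotate i K)"
proof (rule nth_equalityI)
  show "length (rotate i (step p K)) = length (step p (rotate i K))" by simp
next
  fix j assume "j < length (rotate i (step p K))"
  then have j: "j < length K" by simp
  then have t0: "0 < length K" by linarith
  define a where "a = (j + i) mod length K"
  have j1: "(j + 1) mod length K < length K" using t0 by simp
  have a: "a < length K" using t0 by (simp add: a_def)
  have l: "rotate i (step p K) ! j = step p K ! a"
    using j by (simp add: nth_rotate a_def add.commute)
  have r1: "rotate i K ! j = K ! a" using j by (simp add: nth_rotate a_def add.commute)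
  have r2: "rotate i K ! ((j + 1) mod length K) = K ! ((a + 1) mod length K)"
  proof -
    have "rotate i K ! ((j + 1) mod length K) = K ! ((i + (j + 1) mod length K) mod length K)"
      using j1 by (rule nth_rotate)
    also have "i + (j + 1) mod length K = (j + 1) mod length K + i" by (rule add.commute)
    also have "((j + 1) mod length K + i) mod length K = (a + 1) mod length K"
      unfolding a_def by (rule mod_rot_aux[symmetric])
    finally show ?thesis .
  qed
  have "step p (rotate i K) ! j = (fst (K ! a), snd (K ! a) + post p (fst (K ! a)) + pre p (fst (K ! ((a + 1) mod length K))))"
    using j by (simp only: step_nth length_rotate r1 r2)
  also have "\<dots> = step p K ! a" using a by (simp only: step_nth)
  finally show "rotate i (step p K) ! j = step p (rotate i K) ! j" using l by simp
qed

lemma valid_rotate: "valid K \<Longrightarrow> valid (rotate i K)"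
  unfolding valid_def
proof (intro allI impI)
  fix j assume v: "\<forall>i<length K. snd (K ! i) = 0 \<longrightarrow> fst (K ! i) = fst (K ! ((i + 1) mod length K))"
    and j: "j < length (rotate i K)" and z: "snd (rotate i K ! j) = 0"
  then have jl: "j < length K" by simp
  then have t0: "0 < length K" by linarith
  define a where "a = (j + i) mod length K"
  have j1: "(j + 1) mod length K < length K" using t0 by simp
  have a: "a < length K" using t0 by (simp add: a_def)
  have r1: "rotate i K ! j = K ! a" using jl by (simp add: nth_rotate a_def add.commute)
  have r2: "rotate i K ! ((j + 1) mod length K) = K ! ((a + 1) mod length K)"
  proof -
    have "rotate i K ! ((j + 1) mod length K) = K ! ((i + (j + 1) mod length K) mod length K)"
      using j1 by (rule nth_rotate)
    also have "i + (j + 1) mod length K = (j + 1) mod length K + i" by (rule add.commute)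
    also have "((j + 1) mod length K + i) mod length K = (a + 1) mod length K"
      unfolding a_def by (rule mod_rot_aux[symmetric])
    finally show ?thesis .
  qed
  have "snd (K ! a) = 0" using z r1 by simp
  then have "fst (K ! a) = fst (K ! ((a + 1) mod length K))" using v a by blast
  then show "fst (rotate i K ! j) = fst (rotate i K ! ((j + 1) mod length (rotate i K)))"
    using r1 r2 by simp
qed

lemma nth_last': "1 < length xs \<Longrightarrow> xs ! (length xs - 1) = last xs"
  by (cases xs rule: rev_cases) auto

lemma badg_step_other:
  assumes K: "K \<noteq> []" and v: "valid K" and b: "badg g p (blk (oth g) (step p K)) 0"
  shows "badg g p (blk (oth g) K) 0"
proof -
  let ?h = "oth g"
  obtain e a rest where Ke: "K = (e, a) # rest" using K by (metis list.exhaust surj_pair)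
  define t where "t = length K"
  have t0: "0 < t" using K by (simp add: t_def)
  define e1 where "e1 = fst (K ! (1 mod t))"
  define el where "el = fst (last K)"
  define al where "al = snd (last K)"
  have lastK: "last K = K ! (t - 1)" using K by (simp add: t_def last_conv_nth)
  have va0: "a = 0 \<longrightarrow> e = e1"
    using v t0 unfolding valid_def by (auto simp: Ke e1_def t_def)
  have val: "al = 0 \<longrightarrow> el = e"
  proof
    assume "al = 0"
    then have "snd (K ! (t - 1)) = 0" by (simp add: al_def lastK)
    then have "fst (K ! (t - 1)) = fst (K ! ((t - 1 + 1) mod t))"
      using v t0 unfolding valid_def by (simp add: t_def)
    then have "fst (K ! (t - 1)) = fst (K ! 0)" using t0 by simp
    then show "el = e" unfolding el_def lastK by (simp add: Ke)
  qed
  define a' where "a' = a + post p e + pre p e1"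
  define al' where "al' = al + post p el + pre p e"
  have s0: "step p K ! 0 = (e, a')"
    using t0 by (simp add: step_nth Ke a'_def e1_def t_def)
  have sK: "step p K \<noteq> []" using K by (metis length_0_conv length_step)
  have sl: "last (step p K) = (el, al')"
  proof -
    have "last (step p K) = step p K ! (t - 1)" using sK by (simp add: last_conv_nth t_def)
    also have "\<dots> = (fst (K ! (t - 1)), snd (K ! (t - 1)) + post p (fst (K ! (t - 1)))
        + pre p (fst (K ! ((t - 1 + 1) mod t))))"
      using t0 step_nth[of "t - 1" K p] by (simp only: t_def)
    also have "(t - 1 + 1) mod t = 0" using t0 by simp
    also have "fst (K ! 0) = e" by (simp add: Ke)
    finally show ?thesis unfolding el_def al_def al'_def lastK .
  qed
  obtain rest' where sKe: "step p K = (e, a') # rest'"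
    using sK s0 by (cases "step p K") auto
  define v' where "v' = blk ?h (step p K)"
  define w where "w = blk ?h K"
  have v0: "v' ! 0 = (?h, e)" by (simp add: v'_def sKe blk_front0)
  have w0: "w ! 0 = (?h, e)" by (simp add: w_def Ke blk_front0)
  have bad: "badg g p v' 0" using b by (simp add: v'_def)
  define S where "S = (e \<noteq> p)"
  have R: "a \<noteq> 0 \<and> (a > 0) = S"
  proof (rule ccontr)
    assume "\<not> (a \<noteq> 0 \<and> (a > 0) = S)"
    then have ar: "a' \<noteq> 0 \<and> (a' > 0) \<noteq> S" using arith_r[of a e p e1] va0 by (simp add: a'_def S_def)
    have "v' ! 1 = (g, a' > 0)" using ar unfolding v'_def sKe
      by (subst blk_front_mid) auto
    moreover have "1 < length v'" using ar by (simp add: v'_def sKe length_blk_Cons)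
    ultimately have "(a' > 0) = (snd (v' ! 0) \<noteq> p)" using L2r[OF bad] by blast
    then show False using ar v0 by (simp add: S_def)
  qed
  have L: "al \<noteq> 0 \<and> (al > 0) = S"
  proof (rule ccontr)
    assume "\<not> (al \<noteq> 0 \<and> (al > 0) = S)"
    then have ar: "al' \<noteq> 0 \<and> (al' > 0) \<noteq> S" using arith_l[of al e p el] val by (simp add: al'_def S_def)
    have lv: "last v' = (g, al' > 0)" using ar sK sl by (simp add: v'_def last_blk)
    have n1: "1 < length v'"
    proof -
      have "length v' \<noteq> 0" by (simp add: v'_def sKe)
      moreover have "length v' \<noteq> 1"
      proof
        assume "length v' = 1"
        then have "last v' = v' ! 0" by (cases v') (auto simp: last_conv_nth)
        then show False using lv v0 by simp
      qed
      ultimately show ?thesis by linarith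
    qed
    then have "v' ! (length v' - 1) = (g, al' > 0)" using lv nth_last'[of v'] by simp
    then have "(al' > 0) = (snd (v' ! 0) \<noteq> p)" using L2l[OF bad n1] by blast
    then show False using ar v0 by (simp add: S_def)
  qed
  have w1: "w ! 1 = (g, S)" using R unfolding w_def Ke by (subst blk_front_mid) auto
  have lw: "last w = (g, S)" using L K by (simp add: w_def last_blk al_def)
  have n1: "1 < length w" using R by (simp add: w_def Ke length_blk_Cons)
  have "w ! (length w - 1) = (g, S)" using lw n1 nth_last'[of w] by simp
  then have "badg g p w 0" using L3[of w g S p] n1 w0 w1 by (simp add: S_def)
  then show ?thesis by (simp add: w_def)
qed

lemma inner_other: "K' \<noteq> [] \<Longrightarrow> (\<Sum>m<Suc (nat \<bar>snd (K' ! 0)\<bar>). if badg g p (blk (oth g) K') m then 1 else 0)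
    = (if badg g p (blk (oth g) K') 0 then 1 else (0::nat))"
proof -
  assume "K' \<noteq> []"
  then obtain e a rest where Ke: "K' = (e, a) # rest" by (metis list.exhaust surj_pair)
  have "\<not> badg g p (blk (oth g) K') (Suc m)" if "m < nat \<bar>a\<bar>" for m
  proof -
    have "blk (oth g) K' ! Suc m = (g, a > 0)" using that unfolding Ke by (subst blk_front_mid) auto
    then show ?thesis by (simp add: badg_def)
  qed
  then have "(\<Sum>m<nat \<bar>a\<bar>. if badg g p (blk (oth g) K') (Suc m) then 1 else (0::nat)) = 0"
    by simp
  then show ?thesis unfolding Ke nth_Cons_0 snd_conv sum.lessThan_Suc_shift by simp
qed

lemma meas_other:
  assumes K: "K \<noteq> []" and v: "valid K"
  shows "meas g p (blk (oth g) (step p K)) \<le> meas g p (blk (oth g) K)"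
proof -
  have eq: "meas g p (blk (oth g) L) = (\<Sum>i<length L. if badg g p (blk (oth g) (rotate i L)) 0 then 1 else 0)"
    if "L \<noteq> []" for L
  proof -
    have "meas g p (blk (oth g) L) = (\<Sum>i<length L. \<Sum>m<Suc (nat \<bar>snd (L ! i)\<bar>).
       if badg g p (blk (oth g) (rotate i L)) m then 1 else 0)" by (rule meas_blk_split)
    also have "\<dots> = (\<Sum>i<length L. if badg g p (blk (oth g) (rotate i L)) 0 then 1 else 0)"
    proof (rule sum.cong)
      fix i assume "i \<in> {..<length L}"
      then have i: "i < length L" by simp
      have ne: "rotate i L \<noteq> []" using i by (cases L) auto
      have "snd (L ! i) = snd (rotate i L ! 0)" using rotate_nth0[OF i] by simp
      then show "(\<Sum>m<Suc (nat \<bar>snd (L ! i)\<bar>). if badg g p (blk (oth g) (rotate i L)) m then 1 else 0) =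
          (if badg g p (blk (oth g) (rotate i L)) 0 then 1 else (0::nat))"
        using inner_other[OF ne, of g p] by (simp only:)
    qed simp
    finally show ?thesis .
  qed
  have sK: "step p K \<noteq> []" using K by (metis length_0_conv length_step)
  have "meas g p (blk (oth g) (step p K)) = (\<Sum>i<length K. if badg g p (blk (oth g) (rotate i (step p K))) 0 then 1 else 0)"
    using eq[OF sK] by simp
  also have "\<dots> \<le> (\<Sum>i<length K. if badg g p (blk (oth g) (rotate i K)) 0 then 1 else 0)"
  proof (rule sum_mono)
    fix i assume "i \<in> {..<length K}"
    then have i: "i < length K" by simp
    have ne: "rotate i K \<noteq> []" using i by (cases K) auto
    have "badg g p (blk (oth g) (rotate i (step p K))) 0 \<Longrightarrow> badg g p (blk (oth g) (rotate i K)) 0"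
      using badg_step_other[OF ne valid_rotate[OF v]] by (simp add: step_rotate)
    then show "(if badg g p (blk (oth g) (rotate i (step p K))) 0 then 1 else 0) \<le>
        (if badg g p (blk (oth g) (rotate i K)) 0 then 1 else (0::nat))" by simp
  qed
  also have "\<dots> = meas g p (blk (oth g) K)" using eq[OF K] by simp
  finally show ?thesis .
qed



lemma gen_other: "a \<noteq> g \<Longrightarrow> a = oth g" by (cases a; cases g) auto

lemma homog: "freely_reduced xs \<Longrightarrow> \<forall>x\<in>set xs. fst x = h \<Longrightarrow> \<exists>c. xs = pw h c"
proof (induction xs)
  case Nil
  then show ?case by (intro exI[of _ 0]) simp
next
  case (Cons a xs)
  obtain c where c: "xs = pw h c" using Cons by (auto simp: fr_Cons)
  obtain sa where a: "a = (h, sa)" using Cons.prems by (cases a) auto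
  show ?case
  proof (cases "xs = []")
    case True
    then show ?thesis using a by (intro exI[of _ "if sa then 1 else -1"]) (auto simp: pw_def)
  next
    case False
    then have c0: "c \<noteq> 0" using c by auto
    have "hd xs \<noteq> inv_letter a" using Cons.prems False by (simp add: fr_Cons)
    then have "sa = (c > 0)" using c c0 a by (auto simp: hd_pw)
    then have "a # xs = pw h (if c > 0 then c + 1 else c - 1)"
      using c c0 a by (auto simp: pw_pos_Cons pw_neg_Cons)
    then show ?thesis by blast
  qed
qed

lemma fr_takeWhile: "freely_reduced xs \<Longrightarrow> freely_reduced (takeWhile P xs)"
  by (metis fr_append takeWhile_dropWhile_id)
lemma fr_dropWhile: "freely_reduced xs \<Longrightarrow> freely_reduced (dropWhile P xs)"
  by (metis fr_append takeWhile_dropWhile_id)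

lemma parse_blk: "freely_reduced v \<Longrightarrow> v \<noteq> [] \<Longrightarrow> fst (hd v) = g \<Longrightarrow> \<exists>G. v = blk g G \<and> G \<noteq> []"
proof (induction "length v" arbitrary: v rule: less_induct)
  case less
  obtain s rest where v: "v = (g, s) # rest" using less.prems by (cases v) auto
  define ys where "ys = takeWhile (\<lambda>x. fst x \<noteq> g) rest"
  define zs where "zs = dropWhile (\<lambda>x. fst x \<noteq> g) rest"
  have rest: "rest = ys @ zs" by (simp add: ys_def zs_def)
  have frr: "freely_reduced rest" using less.prems v by (simp add: fr_Cons)
  have "\<forall>x\<in>set ys. fst x = oth g" by (auto simp: ys_def gen_other dest: set_takeWhileD)
  moreover have "freely_reduced ys" using frr by (simp add: ys_def fr_takeWhile)
  ultimately obtain b where b: "ys = pw (oth g) b" using homog by blast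
  show ?case
  proof (cases "zs = []")
    case True
    then show ?thesis using v rest b by (intro exI[of _ "[(s, b)]"]) (simp add: blk_Cons)
  next
    case False
    have hz: "fst (hd zs) = g" using False by (simp add: zs_def hd_dropWhile dropWhile_eq_Nil_conv)
      (metis (mono_tags, lifting) False dropWhile_eq_Nil_conv hd_dropWhile zs_def)
    have "freely_reduced zs" using frr by (simp add: zs_def fr_dropWhile)
    moreover have "length zs < length v" using v rest by simp
    ultimately obtain G where "zs = blk g G" "G \<noteq> []" using less.hyps False hz by blast
    then show ?thesis using v rest b by (intro exI[of _ "(s, b) # G"]) (simp add: blk_Cons)
  qed
qed

lemma rep_exists:
  assumes cr: "cyc_reduced u" and ex: "\<exists>x\<in>set u. fst x = g"
  shows "\<exists>c G. u = pw (oth g) c @ blk g G \<and> G \<noteq> [] \<and> compat c (snd (last G))"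
proof -
  define ys where "ys = takeWhile (\<lambda>x. fst x \<noteq> g) u"
  define zs where "zs = dropWhile (\<lambda>x. fst x \<noteq> g) u"
  have u: "u = ys @ zs" by (simp add: ys_def zs_def)
  have fr: "freely_reduced u" using cr by (simp add: cyc_reduced_def)
  have "\<forall>x\<in>set ys. fst x = oth g" by (auto simp: ys_def gen_other dest: set_takeWhileD)
  moreover have "freely_reduced ys" using fr by (simp add: ys_def fr_takeWhile)
  ultimately obtain c where c: "ys = pw (oth g) c" using homog by blast
  have zne: "zs \<noteq> []" using ex by (auto simp: zs_def dropWhile_eq_Nil_conv)
  have hz: "fst (hd zs) = g" using zne by (metis (mono_tags, lifting) dropWhile_eq_Nil_conv hd_dropWhile zs_def)
  have "freely_reduced zs" using fr by (simp add: zs_def fr_dropWhile)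
  then obtain G where G: "zs = blk g G" "G \<noteq> []" using parse_blk zne hz by blast
  have "compat c (snd (last G))"
  proof (cases "c = 0 \<or> snd (last G) = 0")
    case True
    then show ?thesis by (auto simp: compat_def)
  next
    case False
    have lu: "last u = (oth g, snd (last G) > 0)" using False G u by (simp add: last_blk)
    have hu: "hd u = (oth g, c > 0)" using False u c by (simp add: hd_pw)
    have "length (blk g G) \<ge> 1" using G by (cases "blk g G") auto
    moreover have "nat \<bar>c\<bar> \<ge> 1" using False by linarith
    ultimately have "2 \<le> length u" using u c G by simp
    then have "last u \<noteq> inv_letter (hd u)" using cr by (simp add: cyc_reduced_def)
    then have "(snd (last G) > 0) = (c > 0)" using lu hu by auto
    then show ?thesis unfolding compat_def by linarith
  qed
  then show ?thesis using u c G by blast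
qed

lemma cyc_reduced_iff: "cyc_reduced u \<longleftrightarrow> (\<forall>i < length u. u ! ((i + 1) mod length u) \<noteq> inv_letter (u ! i))"
proof
  assume cr: "cyc_reduced u"
  show "\<forall>i < length u. u ! ((i + 1) mod length u) \<noteq> inv_letter (u ! i)"
  proof (intro allI impI)
    fix i assume i: "i < length u"
    show "u ! ((i + 1) mod length u) \<noteq> inv_letter (u ! i)"
    proof (cases "Suc i < length u")
      case True
      then show ?thesis using cr by (simp add: cyc_reduced_def freely_reduced_def)
    next
      case False
      then have i1: "i = length u - 1" using i by simp
      show ?thesis
      proof (cases "length u = 1")
        case True
        then show ?thesis using i1 by simp
      next
        case False
        then have "2 \<le> length u" using i by linarith
        then have "last u \<noteq> inv_letter (hd u)" using cr by (simp add: cyc_reduced_def)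
        moreover have "last u = u ! i" using i1 nth_last'[of u] \<open>2 \<le> length u\<close> by simp
        moreover have "hd u = u ! 0" using i by (cases u) auto
        moreover have "i + 1 = length u" using i1 i by linarith
        then have "(i + 1) mod length u = 0" by simp
        ultimately show ?thesis by (metis inv_eq_iff)
      qed
    qed
  qed
next
  assume H: "\<forall>i < length u. u ! ((i + 1) mod length u) \<noteq> inv_letter (u ! i)"
  have "freely_reduced u" unfolding freely_reduced_def
  proof (intro allI impI)
    fix i assume "Suc i < length u"
    then show "u ! Suc i \<noteq> inv_letter (u ! i)" using H[rule_format, of i] by simp
  qed
  moreover have "2 \<le> length u \<longrightarrow> last u \<noteq> inv_letter (hd u)"
  proof
    assume n: "2 \<le> length u"
    define i where "i = length u - 1"
    have i: "i < length u" using n by (simp add: i_def)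
    have "i + 1 = length u" using n by (simp add: i_def)
    then have "(i + 1) mod length u = 0" by simp
    then have "u ! 0 \<noteq> inv_letter (u ! i)" using H i by metis
    moreover have "last u = u ! i" using n nth_last'[of u] by (simp add: i_def)
    moreover have "hd u = u ! 0" using n by (cases u) auto
    ultimately show "last u \<noteq> inv_letter (hd u)" by (metis inv_eq_iff)
  qed
  ultimately show "cyc_reduced u" by (simp add: cyc_reduced_def)
qed

lemma cyc_reduced_rotate: "cyc_reduced u \<Longrightarrow> cyc_reduced (rotate q u)"
  unfolding cyc_reduced_iff
proof (intro allI impI)
  fix i assume H: "\<forall>i<length u. u ! ((i + 1) mod length u) \<noteq> inv_letter (u ! i)"
    and i: "i < length (rotate q u)"
  let ?n = "length u"
  have il: "i < ?n" using i by simp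
  have n0: "0 < ?n" using il by linarith
  have a: "(q + i) mod ?n < ?n" using n0 by simp
  have i1: "(i + 1) mod ?n < ?n" using n0 by simp
  have "rotate q u ! ((i + 1) mod ?n) = u ! ((q + (i + 1) mod ?n) mod ?n)" using i1 by (rule nth_rotate)
  also have "(q + (i + 1) mod ?n) mod ?n = ((q + i) mod ?n + 1) mod ?n"
    by (metis add.commute mod_rot_aux)
  finally have "rotate q u ! ((i + 1) mod ?n) = u ! (((q + i) mod ?n + 1) mod ?n)" .
  moreover have "rotate q u ! i = u ! ((q + i) mod ?n)" using il by (rule nth_rotate)
  ultimately show "rotate q u ! ((i + 1) mod length (rotate q u)) \<noteq> inv_letter (rotate q u ! i)"
    using H a by simp
qed

lemma blk_adjust: "G \<noteq> [] \<Longrightarrow> compat c (snd (last G)) \<Longrightarrow> blk x G @ pw (oth x) c = blk x (adjust G c)"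
proof -
  assume G: "G \<noteq> []" and cp: "compat c (snd (last G))"
  obtain s b where l: "last G = (s, b)" by (cases "last G")
  have "G = butlast G @ [(s, b)]" using G l by (metis append_butlast_last_id)
  then have "blk x G = blk x (butlast G) @ (x, s) # pw (oth x) b"
    by (metis blk_append blk_Cons blk_Nil append_Nil2)
  moreover have "pw (oth x) b @ pw (oth x) c = pw (oth x) (b + c)"
    using cp l by (intro pw_same) (auto simp: compat_def)
  ultimately show ?thesis using l by (simp add: adjust_def blk_append blk_Cons)
qed

lemma meas_rep: "G \<noteq> [] \<Longrightarrow> compat c (snd (last G)) \<Longrightarrow>
   meas g' p (pw (oth x) c @ blk x G) = meas g' p (blk x (adjust G c))"
  using meas_rotate[of g' p "length (pw (oth x) c)" "pw (oth x) c @ blk x G"]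
    rotate_append[of "pw (oth x) c" "blk x G"] blk_adjust[of G c x] by simp

lemma cr_rep: "cyc_reduced (pw (oth x) c @ blk x G) \<Longrightarrow> G \<noteq> [] \<Longrightarrow> compat c (snd (last G)) \<Longrightarrow>
   cyc_reduced (blk x (adjust G c))"
  using cyc_reduced_rotate[of "pw (oth x) c @ blk x G" "length (pw (oth x) c)"]
    rotate_append[of "pw (oth x) c" "blk x G"] blk_adjust[of G c x] by simp

lemma valid_of_cr: assumes cr: "cyc_reduced (blk x K)" shows "valid K"
  unfolding valid_def
proof (intro allI impI)
  fix i assume i: "i < length K" and z: "snd (K ! i) = 0"
  have ne: "rotate i K \<noteq> []" using i by (cases K) auto
  obtain s b rest where R: "rotate i K = (s, b) # rest" using ne by (metis list.exhaust surj_pair)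
  have Ki: "K ! i = (s, b)" using rotate_nth0[OF i] R by simp
  have b0: "b = 0" using z Ki by simp
  have Kn: "fst (((s, b) # rest) ! (1 mod length ((s, b) # rest))) = fst (K ! ((i + 1) mod length K))"
    using rotate_nth1[OF i] R by (metis length_rotate)
  have cr2: "cyc_reduced (blk x ((s, b) # rest))"
    using cyc_reduced_rotate[OF cr, of "length (blk x (take i K))"] rotate_blk[OF i] R by simp
  define v where "v = blk x ((s, b) # rest)"
  have v0: "v ! 0 = (x, s)" by (simp add: v_def blk_front0)
  have v1: "v ! (1 mod length v) = (x, fst (K ! ((i + 1) mod length K)))"
    using blk_front_next[of x s b rest] b0 Kn by (simp add: v_def)
  have "v ! ((0 + 1) mod length v) \<noteq> inv_letter (v ! 0)"
    using cr2 unfolding cyc_reduced_iff v_def[symmetric] by (metis length_greater_0_conv v_def blk_Nil_iff list.distinct(1))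
  then show "fst (K ! i) = fst (K ! ((i + 1) mod length K))" using v0 v1 Ki by auto
qed



lemma img_gT: "img (aut_of g p) (g, True) = [(g, True), (oth g, p)]"
  by (cases g; cases p) auto
lemma img_gF: "img (aut_of g p) (g, False) = [(oth g, \<not> p), (g, False)]"
  by (cases g; cases p) auto
lemma img_h: "img (aut_of g p) (oth g, e) = [(oth g, e)]"
  by (cases g; cases p; cases e) auto
lemma conj_aut_of[simp]: "conj_gen (aut_of g p) = g" by (cases g; cases p) auto
lemma other_aut_of[simp]: "other_gen (aut_of g p) = oth g" by (cases g; cases p) auto

lemma cancel_cases:
  assumes c: "last (img (aut_of g p) x) = inv_letter (hd (img (aut_of g p) y))"
    and ny: "y \<noteq> inv_letter x"
  shows "(x = (g, True) \<and> y = (oth g, \<not> p)) \<or> (x = (oth g, p) \<and> y = (g, False))"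
proof -
  obtain a s where x: "x = (a, s)" by (cases x)
  obtain b t where y: "y = (b, t)" by (cases y)
  have ga: "a = g \<or> a = oth g" using gen_other by blast
  have gb: "b = g \<or> b = oth g" using gen_other by blast
  show ?thesis
    using ga gb c ny unfolding x y
    by (cases s; cases t; auto simp: img_gT img_gF img_h)
qed

lemma run_sign:
  assumes cr: "cyc_reduced u" and n: "0 < length u"
    and H: "\<forall>k\<le>m. fst (u ! ((a + k) mod length u)) = h"
  shows "k \<le> m \<Longrightarrow> u ! ((a + k) mod length u) = u ! (a mod length u)"
proof (induction k)
  case 0
  then show ?case by simp
next
  case (Suc k)
  let ?n = "length u"
  define q where "q = (a + k) mod ?n"
  have q: "q < ?n" using n by (simp add: q_def)
  have nx: "(q + 1) mod ?n = (a + Suc k) mod ?n"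
    unfolding q_def using mod_add_left_eq[of "a + k" ?n 1] by simp
  have "u ! ((q + 1) mod ?n) \<noteq> inv_letter (u ! q)" using cr q by (simp add: cyc_reduced_iff)
  moreover have "fst (u ! q) = h" using H Suc.prems by (simp add: q_def)
  moreover have "fst (u ! ((q + 1) mod ?n)) = h" using H[rule_format, of "Suc k"] Suc.prems nx by simp
  ultimately have "u ! ((q + 1) mod ?n) = u ! q"
    by (cases "u ! q"; cases "u ! ((q + 1) mod ?n)") auto
  then show ?case using Suc nx by (simp add: q_def)
qed



lemma badgI:
  assumes "j < length u" "fst (u ! j) = oth g" "1 \<le> d1" "1 \<le> d2" "d1 + d2 \<le> length u"
    "u ! ((j + (length u - d1)) mod length u) = (g, snd (u ! j) \<noteq> p)"
    "u ! ((j + d2) mod length u) = (g, snd (u ! j) \<noteq> p)"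
    "\<And>d. 0 < d \<Longrightarrow> d < d1 \<Longrightarrow> fst (u ! ((j + (length u - d)) mod length u)) = oth g"
    "\<And>d. 0 < d \<Longrightarrow> d < d2 \<Longrightarrow> fst (u ! ((j + d) mod length u)) = oth g"
  shows "badg g p u j"
  unfolding badg_def using assms by blast

lemma trivialI:
  assumes "1 \<le> r" "r + 2 \<le> length u" "u ! (s mod length u) = (conj_gen a, True)"
    "u ! ((s + r + 1) mod length u) = (conj_gen a, False)"
    "\<And>k. k \<in> {1..r} \<Longrightarrow> u ! ((s + k) mod length u) = (other_gen a, e)"
    "kk \<le> r" "i = (s + kk) mod length u"
  shows "trivial_at a u i"
  unfolding trivial_at_def Let_def using assms by blast

lemma char_good:
  assumes cr: "cyc_reduced u" and nb: "\<forall>j<length u. \<not> badg g p u j"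
  shows "\<not> proper_cancellation (aut_of g p) u"
proof -
  let ?n = "length u"
  let ?h = "oth g"
  have triv: "trivial_at (aut_of g p) u i" if i: "i < ?n" and ca: "cancel_at (aut_of g p) u i" for i
  proof -
    define j where "j = Suc i mod ?n"
    have n0: "0 < ?n" using i by linarith
    have jn: "j < ?n" using n0 by (simp add: j_def)
    have ny: "u ! j \<noteq> inv_letter (u ! i)" using cr i by (simp add: cyc_reduced_iff j_def)
    have cc: "(u ! i = (g, True) \<and> u ! j = (?h, \<not> p)) \<or> (u ! i = (?h, p) \<and> u ! j = (g, False))"
      using cancel_cases[OF _ ny] ca by (simp add: cancel_at_def j_def)
    have n2: "2 \<le> ?n"
    proof (rule ccontr)
      assume "\<not> 2 \<le> ?n"
      then have "?n = 1" using n0 by linarith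
      then have "j = i" using i by (simp add: j_def)
      then show False using cc by auto
    qed
    have ji: "(j + (?n - 1)) mod ?n = i"
    proof -
      have "(j + (?n - 1)) mod ?n = (Suc i + (?n - 1)) mod ?n" unfolding j_def by (rule mod_add_left_eq)
      also have "Suc i + (?n - 1) = i + ?n" using n2 by simp
      finally show ?thesis using i by simp
    qed
    from cc show ?thesis
    proof
      assume A: "u ! i = (g, True) \<and> u ! j = (?h, \<not> p)"
      define P where "P d \<longleftrightarrow> 1 \<le> d \<and> fst (u ! ((j + d) mod ?n)) = g" for d
      have "P (?n - 1)" using ji A n2 by (simp add: P_def)
      then obtain d2 where d2: "P d2" "\<forall>d<d2. \<not> P d" using exists_least_iff[of P] by blast
      have d2le: "d2 \<le> ?n - 1" using d2(2) \<open>P (?n - 1)\<close> by (meson not_le)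
      have btw: "fst (u ! ((j + d) mod ?n)) = ?h" if "1 \<le> d" "d < d2" for d
        using d2(2) that by (auto simp: P_def intro: gen_other)
      have run0: "\<forall>k\<le>d2 - 1. fst (u ! ((j + k) mod ?n)) = ?h"
      proof (intro allI impI)
        fix k assume "k \<le> d2 - 1"
        then show "fst (u ! ((j + k) mod ?n)) = ?h"
          using btw[of k] A jn d2(1) by (cases "k = 0") (auto simp: P_def)
      qed
      have run: "u ! ((j + k) mod ?n) = (?h, \<not> p)" if "k \<le> d2 - 1" for k
        using run_sign[OF cr n0 run0 that] A jn by simp
      define z where "z = u ! ((j + d2) mod ?n)"
      have fz: "fst z = g" using d2(1) by (simp add: P_def z_def)
      have zF: "z = (g, False)"
      proof (rule ccontr)
        assume "z \<noteq> (g, False)"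
        then have zT: "z = (g, True)" using fz by (cases z) auto
        have "badg g p u j"
          using jn A d2le n2 ji zT btw d2(1)
          by (intro badgI[of j u g 1 d2 p]) (auto simp: P_def z_def)
        then show False using nb jn by blast
      qed
      have d2n: "d2 \<noteq> ?n - 1" using zF ji A unfolding z_def by auto
      show ?thesis
      proof (rule trivialI[where s=i and r=d2 and e="\<not> p" and kk=0], unfold conj_aut_of other_aut_of)
        show "1 \<le> d2" using d2(1) by (simp add: P_def)
        show "d2 + 2 \<le> ?n" using d2le d2n n2 by linarith
        show "u ! (i mod ?n) = (g, True)" using A i by simp
        have "(i + d2 + 1) mod ?n = (j + d2) mod ?n"
          unfolding j_def by (simp add: mod_add_left_eq)
        then show "u ! ((i + d2 + 1) mod ?n) = (g, False)" using zF by (simp add: z_def)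
        show "u ! ((i + k) mod ?n) = (?h, \<not> p)" if k: "k \<in> {1..d2}" for k
        proof -
          have "(j + (k - 1)) mod ?n = (Suc i + (k - 1)) mod ?n" unfolding j_def by (rule mod_add_left_eq)
          also have "Suc i + (k - 1) = i + k" using k by auto
          finally have "(i + k) mod ?n = (j + (k - 1)) mod ?n" by simp
          moreover have "k - 1 \<le> d2 - 1" using k by auto
          ultimately show "u ! ((i + k) mod ?n) = (?h, \<not> p)" using run[of "k - 1"] by simp
        qed
        show "0 \<le> d2" by simp
        show "i = (i + 0) mod ?n" using i by simp
      qed
    next
      assume B: "u ! i = (?h, p) \<and> u ! j = (g, False)"
      define P where "P d \<longleftrightarrow> 1 \<le> d \<and> fst (u ! ((i + (?n - d)) mod ?n)) = g" for d
      have ij: "(i + (?n - (?n - 1))) mod ?n = j" using n2 by (simp add: j_def)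
      have "P (?n - 1)" using ij B n2 by (simp add: P_def)
      then obtain d1 where d1: "P d1" "\<forall>d<d1. \<not> P d" using exists_least_iff[of P] by blast
      have d1le: "d1 \<le> ?n - 1" using d1(2) \<open>P (?n - 1)\<close> by (meson not_le)
      have d11: "1 \<le> d1" using d1(1) by (simp add: P_def)
      have btw: "fst (u ! ((i + (?n - d)) mod ?n)) = ?h" if "1 \<le> d" "d < d1" for d
        using d1(2) that by (auto simp: P_def intro: gen_other)
      define z where "z = u ! ((i + (?n - d1)) mod ?n)"
      have fz: "fst z = g" using d1(1) by (simp add: P_def z_def)
      have j1: "(i + 1) mod ?n = j" by (simp add: j_def)
      have zT: "z = (g, True)"
      proof (rule ccontr)
        assume "z \<noteq> (g, True)"
        then have zF: "z = (g, False)" using fz by (cases z) auto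
        have "badg g p u i"
          using i B d11 d1le n2 zF j1 btw
          by (intro badgI[of i u g d1 1 p]) (auto simp: z_def)
        then show False using nb i by blast
      qed
      have d1n: "d1 \<noteq> ?n - 1" using zT ij B unfolding z_def by auto
      define s0 where "s0 = (i + (?n - d1)) mod ?n"
      have s0k: "(s0 + 1 + k) mod ?n = (i + (?n - (d1 - 1 - k))) mod ?n" if "k \<le> d1 - 1" for k
      proof -
        have "(s0 + 1 + k) mod ?n = (i + (?n - d1) + 1 + k) mod ?n"
          unfolding s0_def by (metis add.assoc mod_add_left_eq)
        also have "i + (?n - d1) + 1 + k = i + (?n - (d1 - 1 - k))" using that d11 d1le by simp
        finally show ?thesis .
      qed
      have run0: "\<forall>k\<le>d1 - 1. fst (u ! ((s0 + 1 + k) mod ?n)) = ?h"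
      proof (intro allI impI)
        fix k assume k: "k \<le> d1 - 1"
        show "fst (u ! ((s0 + 1 + k) mod ?n)) = ?h"
        proof (cases "k = d1 - 1")
          case True
          then have "(s0 + 1 + k) mod ?n = i" using s0k[OF k] i by simp
          then show ?thesis using B by simp
        next
          case False
          then show ?thesis using s0k[OF k] btw[of "d1 - 1 - k"] k by simp
        qed
      qed
      have last_i: "(s0 + 1 + (d1 - 1)) mod ?n = i" using s0k[of "d1 - 1"] i by simp
      have run: "u ! ((s0 + 1 + k) mod ?n) = (?h, p)" if "k \<le> d1 - 1" for k
      proof -
        have "u ! ((s0 + 1 + k) mod ?n) = u ! ((s0 + 1) mod ?n)" using run_sign[OF cr n0 run0 that] .
        moreover have "u ! ((s0 + 1 + (d1 - 1)) mod ?n) = u ! ((s0 + 1) mod ?n)" using run_sign[OF cr n0 run0] by simp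
        ultimately show ?thesis using last_i B by simp
      qed
      show ?thesis
      proof (rule trivialI[where s=s0 and r=d1 and e=p and kk=d1], unfold conj_aut_of other_aut_of)
        show "1 \<le> d1" by (rule d11)
        show "d1 + 2 \<le> ?n" using d1le d1n n2 by linarith
        show "u ! (s0 mod ?n) = (g, True)" using zT by (simp add: z_def s0_def)
        have "(s0 + d1 + 1) mod ?n = (i + 1) mod ?n"
        proof -
          have "(s0 + d1 + 1) mod ?n = (i + (?n - d1) + d1 + 1) mod ?n"
            unfolding s0_def by (metis add.assoc mod_add_left_eq)
          also have "i + (?n - d1) + d1 + 1 = (i + 1) + ?n" using d1le by simp
          also have "((i + 1) + ?n) mod ?n = (i + 1) mod ?n" by (rule mod_add_self2)
          finally show ?thesis .
        qed
        then show "u ! ((s0 + d1 + 1) mod ?n) = (g, False)" using j1 B by simp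
        show "u ! ((s0 + k) mod ?n) = (?h, p)" if k: "k \<in> {1..d1}" for k
        proof -
          from k have "s0 + k = s0 + 1 + (k - 1)" by simp
          then show "u ! ((s0 + k) mod ?n) = (?h, p)" using run[of "k - 1"] k by simp
        qed
        show "d1 \<le> d1" by simp
        have "s0 + d1 = s0 + 1 + (d1 - 1)" using d11 by simp
        then show "i = (s0 + d1) mod ?n" using last_i by simp
      qed
    qed
  qed
  show ?thesis unfolding proper_cancellation_def using triv by blast
qed



lemma no_letter_id: "cyc_reduced u \<Longrightarrow> \<forall>x\<in>set u. fst x \<noteq> g \<Longrightarrow> apply_aut (aut_of g p) u = u"
proof -
  assume cr: "cyc_reduced u" and nl: "\<forall>x\<in>set u. fst x \<noteq> g"
  have "concat (map (img (aut_of g p)) u) = u" using nl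
    by (induction u) (auto simp: img_other)
  then show ?thesis using cr
    by (simp add: apply_aut_def cyc_reduce_def free_reduce_id cyc_strip_id cyc_reduced_def)
qed

lemma meas_no_g: "\<forall>x\<in>set u. fst x \<noteq> g \<Longrightarrow> meas g p u = 0"
proof -
  assume nl: "\<forall>x\<in>set u. fst x \<noteq> g"
  have "\<not> badg g p u j" for j
  proof
    assume "badg g p u j"
    then obtain d2 where "u ! ((j + d2) mod length u) = (g, snd (u ! j) \<noteq> p)" "j < length u"
      unfolding badg_def by blast
    moreover have "0 < length u" using \<open>j < length u\<close> by linarith
    then have "(j + d2) mod length u < length u" by simp
    ultimately show False using nl by (metis fst_conv nth_mem)
  qed
  then show ?thesis by (simp add: meas_def)
qed

lemma meas_zero: "meas g p u = 0 \<Longrightarrow> \<forall>j<length u. \<not> badg g p u j"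
proof (intro allI impI notI)
  fix j assume m: "meas g p u = 0" and j: "j < length u" and b: "badg g p u j"
  have "(if badg g p u j then 1 else 0) \<le> meas g p u"
    unfolding meas_def using j by (intro member_le_sum) auto
  then show False using m b by simp
qed

lemma meas_le_len: "meas g p u \<le> length u"
proof -
  have "meas g p u \<le> (\<Sum>j<length u. 1)" unfolding meas_def by (intro sum_mono) auto
  then show ?thesis by simp
qed

lemma self_step: "cyc_reduced u \<Longrightarrow> meas g p (apply_aut (aut_of g p) u) \<le> meas g p u - 1"
proof -
  assume cr: "cyc_reduced u"
  show ?thesis
  proof (cases "\<exists>x\<in>set u. fst x = g")
    case True
    obtain c G where u: "u = pw (oth g) c @ blk g G" and G: "G \<noteq> []" and cp: "compat c (snd (last G))"
      using rep_exists[OF cr True] by blast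
    define K where "K = adjust G c"
    have v: "valid K" using cr_rep[of g c G] cr u G cp valid_of_cr by (simp add: K_def)
    obtain c' G' where r: "apply_aut (aut_of g p) (pw (oth g) c @ blk g G) = pw (oth g) c' @ blk g G'"
      "G' \<noteq> []" "compat c' (snd (last G'))" "adjust G' c' = step p K"
      using apply_rep[OF G v[unfolded K_def]] K_def by blast
    have "meas g p (apply_aut (aut_of g p) u) = meas g p (blk g (step p K))"
      using u r meas_rep[of G' c' g p g] by simp
    also have "\<dots> = MG p (step p K)" by (rule meas_blk_g)
    also have "\<dots> \<le> MG p K - 1" by (rule MG_step)
    also have "MG p K = meas g p u" using u meas_rep[OF G cp, of g p g] meas_blk_g[of g p K] K_def by simp
    finally show ?thesis .
  next
    case False
    then show ?thesis using no_letter_id[OF cr] meas_no_g by auto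
  qed
qed

lemma other_step: "cyc_reduced u \<Longrightarrow> meas g p (apply_aut (aut_of (oth g) p) u) \<le> meas g p u"
proof -
  assume cr: "cyc_reduced u"
  show ?thesis
  proof (cases "\<exists>x\<in>set u. fst x = oth g")
    case True
    obtain c G where u: "u = pw (oth (oth g)) c @ blk (oth g) G" and G: "G \<noteq> []" and cp: "compat c (snd (last G))"
      using rep_exists[OF cr True] by blast
    define K where "K = adjust G c"
    have v: "valid K" using cr_rep[of "oth g" c G] cr u G cp valid_of_cr by (simp add: K_def)
    have K: "K \<noteq> []" using G by (simp add: K_def adjust_def)
    obtain c' G' where r: "apply_aut (aut_of (oth g) p) (pw (oth (oth g)) c @ blk (oth g) G) = pw (oth (oth g)) c' @ blk (oth g) G'"
      "G' \<noteq> []" "compat c' (snd (last G'))" "adjust G' c' = step p K"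
      using apply_rep[OF G v[unfolded K_def]] K_def by blast
    have "meas g p (apply_aut (aut_of (oth g) p) u) = meas g p (blk (oth g) (step p K))"
      using u r meas_rep[of G' c' g p "oth g"] by simp
    also have "\<dots> \<le> meas g p (blk (oth g) K)" by (rule meas_other[OF K v])
    also have "\<dots> = meas g p u" using u meas_rep[OF G cp, of g p "oth g"] K_def by simp
    finally show ?thesis .
  next
    case False
    then show ?thesis using no_letter_id[OF cr] by auto
  qed
qed

lemma pow_cr: "cyc_reduced u \<Longrightarrow> cyc_reduced ((apply_aut a ^^ n) u)"
  by (induction n) (auto simp: apply_aut_red)

lemma self_pow: "cyc_reduced u \<Longrightarrow> meas g p ((apply_aut (aut_of g p) ^^ n) u) \<le> meas g p u - n"
proof (induction n)
  case 0
  then show ?case by simp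
next
  case (Suc n)
  have "meas g p ((apply_aut (aut_of g p) ^^ Suc n) u) \<le> meas g p ((apply_aut (aut_of g p) ^^ n) u) - 1"
    using self_step[OF pow_cr[OF Suc.prems]] by simp
  then show ?case using Suc by linarith
qed

lemma other_pow: "cyc_reduced u \<Longrightarrow> meas g p ((apply_aut (aut_of (oth g) p) ^^ n) u) \<le> meas g p u"
proof (induction n)
  case 0
  then show ?case by simp
next
  case (Suc n)
  have "meas g p ((apply_aut (aut_of (oth g) p) ^^ Suc n) u) \<le> meas g p ((apply_aut (aut_of (oth g) p) ^^ n) u)"
    using other_step[OF pow_cr[OF Suc.prems]] by simp
  then show ?case using Suc by linarith
qed

lemma chain_cr: "cyc_reduced w \<Longrightarrow> cyc_reduced (chain a b l m k w)"
  by (induction k) (auto intro: pow_cr)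

lemma chain_bound: "cyc_reduced w \<Longrightarrow>
   meas g p (chain (aut_of Y p) (aut_of X p) l m k w) \<le> meas g p w - (\<Sum>i=1..k. if g = X then l i else m i)"
proof (induction k)
  case 0
  then show ?case by simp
next
  case (Suc k)
  let ?c = "chain (aut_of Y p) (aut_of X p) l m k w"
  have cc: "cyc_reduced ?c" using chain_cr[OF Suc.prems] .
  have ccl: "cyc_reduced ((apply_aut (aut_of X p) ^^ l (Suc k)) ?c)" using pow_cr[OF cc] .
  have e: "chain (aut_of Y p) (aut_of X p) l m (Suc k) w =
     (apply_aut (aut_of Y p) ^^ m (Suc k)) ((apply_aut (aut_of X p) ^^ l (Suc k)) ?c)" by simp
  have s: "(\<Sum>i=1..Suc k. if g = X then l i else m i) = (\<Sum>i=1..k. if g = X then l i else m i) +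
      (if g = X then l (Suc k) else m (Suc k))" by simp
  show ?case
  proof (cases g)
    case X
    have "meas g p ((apply_aut (aut_of Y p) ^^ m (Suc k)) ((apply_aut (aut_of X p) ^^ l (Suc k)) ?c))
        \<le> meas g p ((apply_aut (aut_of X p) ^^ l (Suc k)) ?c)"
      using other_pow[OF ccl, of g p "m (Suc k)"] X by simp
    also have "\<dots> \<le> meas g p ?c - l (Suc k)" using self_pow[OF cc, of g p "l (Suc k)"] X by simp
    finally show ?thesis using Suc.IH[OF Suc.prems] e s X by simp
  next
    case Y
    have A: "meas g p ((apply_aut (aut_of Y p) ^^ m (Suc k)) ((apply_aut (aut_of X p) ^^ l (Suc k)) ?c))
        \<le> meas g p ((apply_aut (aut_of X p) ^^ l (Suc k)) ?c) - m (Suc k)"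
      using self_pow[OF ccl, of g p "m (Suc k)"] Y by simp
    have B: "meas g p ((apply_aut (aut_of X p) ^^ l (Suc k)) ?c) \<le> meas g p ?c"
      using other_pow[OF cc, of g p "l (Suc k)"] Y by simp
    have C: "meas g p ?c \<le> meas g p w - (\<Sum>i=1..k. if g = X then l i else m i)" by (rule Suc.IH[OF Suc.prems])
    show ?thesis unfolding e s using A B C Y by simp
  qed
qed

lemma final_one:
  assumes cr: "cyc_reduced w" and len: "length w \<le> (\<Sum>i=1..k. if g = X then l i else m i)"
  shows "\<not> proper_cancellation (aut_of g p) (chain (aut_of Y p) (aut_of X p) l m k w)"
proof -
  have "meas g p (chain (aut_of Y p) (aut_of X p) l m k w) = 0"
    using chain_bound[OF cr, of g p l m k] meas_le_len[of g p w] len by linarith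
  then show ?thesis using char_good[OF chain_cr[OF cr]] meas_zero by blast
qed


theorem lemma2p5:
  fixes w :: word and k :: nat and l m :: "nat \<Rightarrow> nat"
  assumes "cyc_reduced w"
  shows "(length w \<le> (\<Sum>i=1..k. l i) \<longrightarrow>
            \<not> proper_cancellation Sig (chain Tau Sig l m k w))
       \<and> (length w \<le> (\<Sum>i=1..k. m i) \<longrightarrow>
            \<not> proper_cancellation Tau (chain Tau Sig l m k w))
       \<and> (length w \<le> (\<Sum>i=1..k. l i) \<longrightarrow>
            \<not> proper_cancellation SigInv (chain TauInv SigInv l m k w))
       \<and> (length w \<le> (\<Sum>i=1..k. m i) \<longrightarrow>
            \<not> proper_cancellation TauInv (chain TauInv SigInv l m k w))"
proof (intro conjI impI)
  assume "length w \<le> (\<Sum>i=1..k. l i)"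
  then show "\<not> proper_cancellation Sig (chain Tau Sig l m k w)"
    using final_one[OF assms, of X l m k True] by simp
next
  assume "length w \<le> (\<Sum>i=1..k. m i)"
  then show "\<not> proper_cancellation Tau (chain Tau Sig l m k w)"
    using final_one[OF assms, of Y l m k True] by simp
next
  assume "length w \<le> (\<Sum>i=1..k. l i)"
  then show "\<not> proper_cancellation SigInv (chain TauInv SigInv l m k w)"
    using final_one[OF assms, of X l m k False] by simp
next
  assume "length w \<le> (\<Sum>i=1..k. m i)"
  then show "\<not> proper_cancellation TauInv (chain TauInv SigInv l m k w)"
    using final_one[OF assms, of Y l m k False] by simp
qed

end
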